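(* There exists a computable function $f:\mathbb{N}\to\mathbb{N}$ such that the following holds. Let $G=(V,E)$ be an undirected graph with pathwidth $w$, let $\varphi$ be an $\mathit{MSO}_2$ formula interpreted over $G$, and let $n=|V|+|E|$ and $k=w+|\varphi|$. Then there exists an ordered binary decision diagram (OBDD) computing $\mathcal{F}_{\varphi,G}$ with at most $f(k)\cdot n$ nodes. (That is, the OBDD size is fixed-parameter linear in $n$ with respect to $k$.)
   Context: $\mathit{MSO}_2$: formulas are interpreted over a graph $G=(V,E)$ with two disjoint universes $U_V=V$ and $U_E=E$. There are four kinds of variables: vertex object variables (values in $V$), edge object variables (values in $E$), vertex set variables (subsets of $V$), edge set variables (subsets of $E$). Atomic formulas: $\mathit{Adj}(v,e)$ (true iff the vertex assigned to $v$ is an endpoint of the edge assigned to $e$); $x=y$ for object variables of the same sort; $x\in Y$ for an object variable and set variable of the same sort. Formulas are closed under $\neg$, $\wedge$ and existential quantification over variables of each kind, with the usual semantics. Size: atomic formulas have size 3, $|\neg\psi|=1+|\psi|$, $|\psi\wedge\rho|=1+|\psi|+|\rho|$, $|(\exists\cdot)\psi|=1+|\psi|$. Decision variables $\mathcal{D}_{\varphi,G}$: $[x=v]$ for each free vertex object variable $x$ of $\varphi$ and $v\in V$; $[x=e]$ for each free edge object variable $x$ and $e\in E$; $[v\in X]$ for each free vertex set variable $X$ and $v\in V$; $[e\in X]$ for each free edge set variable $X$ and $e\in E$. A Boolean assignment $\delta$ to $\mathcal{D}_{\varphi,G}$ is consistent if for every free vertex (resp. edge) object variable $x$ exactly one of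 $[x=u]$, $u\in V$ (resp. $[x=e]$, $e\in E$) is true; it then encodes the assignment $\alpha$ with $\alpha(x)=$ the unique $o$ with $\delta([x=o])=1$ and $\alpha(X)=\{o:\delta([o\in X])=1\}$. $\mathcal{F}_{\varphi,G}$ is the Boolean function on $\mathcal{D}_{\varphi,G}$ whose models are exactly the consistent assignments encoding assignments satisfying $\varphi$ on $G$. An OBDD is a rooted DAG with a unique source, internal decision nodes labeled by variables with a 0-edge and a 1-edge, and leaves labeled $0$ or $1$, such that along every path variables appear in accordance with a fixed strict linear order; it computes a function $f$ if its variables are among those of $f$ and the value obtained by following edges according to an assignment equals $f$ on that assignment. Pathwidth is the minimum width of a tree decomposition whose tree is a path. *)

theory Defs
  imports Main
begin

datatype recf = RZ | RS | RProj nat | RComp recf "recf list" | RPrec recf recf | RMn recf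

inductive reval :: "recf \<Rightarrow> nat list \<Rightarrow> nat \<Rightarrow> bool" where
  zero: "reval RZ xs 0"
| succ: "reval RS (x # xs) (Suc x)"
| proj: "i < length xs \<Longrightarrow> reval (RProj i) xs (xs ! i)"
| comp: "list_all2 (\<lambda>g y. reval g xs y) gs ys \<Longrightarrow> reval f ys z \<Longrightarrow> reval (RComp f gs) xs z"
| prec0: "reval f xs y \<Longrightarrow> reval (RPrec f g) (0 # xs) y"
| precS: "reval (RPrec f g) (n # xs) y \<Longrightarrow> reval g (n # y # xs) z
           \<Longrightarrow> reval (RPrec f g) (Suc n # xs) z"
| mn: "reval f (y # xs) 0 \<Longrightarrow> (\<forall>z<y. \<exists>m. reval f (z # xs) (Suc m))
           \<Longrightarrow> reval (RMn f) xs y"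

definition computable :: "(nat \<Rightarrow> nat) \<Rightarrow> bool" where
  "computable f \<longleftrightarrow> (\<exists>r. \<forall>n. reval r [n] (f n))"

definition graph :: "nat set \<Rightarrow> nat set set \<Rightarrow> bool" where
  "graph V E \<longleftrightarrow> finite V \<and> E \<subseteq> {{u, v} | u v. u \<in> V \<and> v \<in> V \<and> u \<noteq> v}"

definition path_decomp :: "nat set \<Rightarrow> nat set set \<Rightarrow> nat set list \<Rightarrow> bool" where
  "path_decomp V E B \<longleftrightarrow> B \<noteq> [] \<and> (\<forall>b\<in>set B. b \<subseteq> V)
     \<and> (\<forall>v\<in>V. \<exists>b\<in>set B. v \<in> b) \<and> (\<forall>e\<in>E. \<exists>b\<in>set B. e \<subseteq> b)
     \<and> (\<forall>v i j l. i \<le> j \<and> j \<le> l \<and> l < length B \<and> v \<in> B ! i \<and> v \<in> B ! l \<longrightarrow> v \<in> B ! j)"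

definition pd_width :: "nat set list \<Rightarrow> nat" where
  "pd_width B = Max (card ` set B) - 1"

definition pathwidth :: "nat set \<Rightarrow> nat set set \<Rightarrow> nat" where
  "pathwidth V E = (LEAST w. \<exists>B. path_decomp V E B \<and> pd_width B = w)"

text \<open>Four disjoint sorts of variables, each indexed by nat: vertex object variables (VO),
 edge object variables (EO), vertex set variables (VS), edge set variables (ES).\<close>

datatype mso =
    Adj nat nat
  | EqV nat nat
  | EqE nat nat
  | InV nat nat
  | InE nat nat
  | Neg mso
  | Conj mso mso
  | ExVO nat mso
  | ExEO nat mso
  | ExVS nat mso
  | ExES nat mso

fun msize :: "mso \<Rightarrow> nat" where
  "msize (Adj _ _) = 3"
| "msize (EqV _ _) = 3"
| "msize (EqE _ _) = 3"
| "msize (InV _ _) = 3"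
| "msize (InE _ _) = 3"
| "msize (Neg p) = 1 + msize p"
| "msize (Conj p q) = 1 + msize p + msize q"
| "msize (ExVO _ p) = 1 + msize p"
| "msize (ExEO _ p) = 1 + msize p"
| "msize (ExVS _ p) = 1 + msize p"
| "msize (ExES _ p) = 1 + msize p"

fun fvo :: "mso \<Rightarrow> nat set" where
  "fvo (Adj x _) = {x}"
| "fvo (EqV x y) = {x, y}"
| "fvo (EqE _ _) = {}"
| "fvo (InV x _) = {x}"
| "fvo (InE _ _) = {}"
| "fvo (Neg p) = fvo p"
| "fvo (Conj p q) = fvo p \<union> fvo q"
| "fvo (ExVO x p) = fvo p - {x}"
| "fvo (ExEO _ p) = fvo p"
| "fvo (ExVS _ p) = fvo p"
| "fvo (ExES _ p) = fvo p"

fun feo :: "mso \<Rightarrow> nat set" where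
  "feo (Adj _ e) = {e}"
| "feo (EqV _ _) = {}"
| "feo (EqE x y) = {x, y}"
| "feo (InV _ _) = {}"
| "feo (InE x _) = {x}"
| "feo (Neg p) = feo p"
| "feo (Conj p q) = feo p \<union> feo q"
| "feo (ExVO _ p) = feo p"
| "feo (ExEO x p) = feo p - {x}"
| "feo (ExVS _ p) = feo p"
| "feo (ExES _ p) = feo p"

fun fvs :: "mso \<Rightarrow> nat set" where
  "fvs (Adj _ _) = {}"
| "fvs (EqV _ _) = {}"
| "fvs (EqE _ _) = {}"
| "fvs (InV _ X) = {X}"
| "fvs (InE _ _) = {}"
| "fvs (Neg p) = fvs p"
| "fvs (Conj p q) = fvs p \<union> fvs q"
| "fvs (ExVO _ p) = fvs p"
| "fvs (ExEO _ p) = fvs p"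
| "fvs (ExVS X p) = fvs p - {X}"
| "fvs (ExES _ p) = fvs p"

fun fes :: "mso \<Rightarrow> nat set" where
  "fes (Adj _ _) = {}"
| "fes (EqV _ _) = {}"
| "fes (EqE _ _) = {}"
| "fes (InV _ _) = {}"
| "fes (InE _ X) = {X}"
| "fes (Neg p) = fes p"
| "fes (Conj p q) = fes p \<union> fes q"
| "fes (ExVO _ p) = fes p"
| "fes (ExEO _ p) = fes p"
| "fes (ExVS _ p) = fes p"
| "fes (ExES X p) = fes p - {X}"

record asg =
  avo :: "nat \<Rightarrow> nat"
  aeo :: "nat \<Rightarrow> nat set"
  avs :: "nat \<Rightarrow> nat set"
  aes :: "nat \<Rightarrow> nat set set"

fun sat :: "nat set \<Rightarrow> nat set set \<Rightarrow> asg \<Rightarrow> mso \<Rightarrow> bool" where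
  "sat V E a (Adj x e) = (avo a x \<in> aeo a e)"
| "sat V E a (EqV x y) = (avo a x = avo a y)"
| "sat V E a (EqE x y) = (aeo a x = aeo a y)"
| "sat V E a (InV x X) = (avo a x \<in> avs a X)"
| "sat V E a (InE x X) = (aeo a x \<in> aes a X)"
| "sat V E a (Neg p) = (\<not> sat V E a p)"
| "sat V E a (Conj p q) = (sat V E a p \<and> sat V E a q)"
| "sat V E a (ExVO x p) = (\<exists>v\<in>V. sat V E (a\<lparr>avo := (avo a)(x := v)\<rparr>) p)"
| "sat V E a (ExEO x p) = (\<exists>e\<in>E. sat V E (a\<lparr>aeo := (aeo a)(x := e)\<rparr>) p)"
| "sat V E a (ExVS X p) = (\<exists>S\<subseteq>V. sat V E (a\<lparr>avs := (avs a)(X := S)\<rparr>) p)"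
| "sat V E a (ExES X p) = (\<exists>S\<subseteq>E. sat V E (a\<lparr>aes := (aes a)(X := S)\<rparr>) p)"

datatype dvar =
    DVO nat nat          \<comment> \<open>[x = v]\<close>
  | DEO nat "nat set"    \<comment> \<open>[x = e]\<close>
  | DVS nat nat          \<comment> \<open>[v \<in> X]\<close>
  | DES nat "nat set"    \<comment> \<open>[e \<in> X]\<close>

definition dvars :: "mso \<Rightarrow> nat set \<Rightarrow> nat set set \<Rightarrow> dvar set" where
  "dvars \<phi> V E =
     {DVO x v | x v. x \<in> fvo \<phi> \<and> v \<in> V} \<union> {DEO x e | x e. x \<in> feo \<phi> \<and> e \<in> E}
   \<union> {DVS X v | X v. X \<in> fvs \<phi> \<and> v \<in> V} \<union> {DES X e | X e. X \<in> fes \<phi> \<and> e \<in> E}"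

definition consistent :: "mso \<Rightarrow> nat set \<Rightarrow> nat set set \<Rightarrow> (dvar \<Rightarrow> bool) \<Rightarrow> bool" where
  "consistent \<phi> V E \<delta> \<longleftrightarrow>
     (\<forall>x\<in>fvo \<phi>. \<exists>!v. v \<in> V \<and> \<delta> (DVO x v)) \<and> (\<forall>x\<in>feo \<phi>. \<exists>!e. e \<in> E \<and> \<delta> (DEO x e))"

definition decode :: "nat set \<Rightarrow> nat set set \<Rightarrow> (dvar \<Rightarrow> bool) \<Rightarrow> asg" where
  "decode V E \<delta> = \<lparr> avo = (\<lambda>x. THE v. v \<in> V \<and> \<delta> (DVO x v)),
                    aeo = (\<lambda>x. THE e. e \<in> E \<and> \<delta> (DEO x e)),
                    avs = (\<lambda>X. {v \<in> V. \<delta> (DVS X v)}),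
                    aes = (\<lambda>X. {e \<in> E. \<delta> (DES X e)}) \<rparr>"

text \<open>F_{phi,G}: a Boolean function on the decision variables (total assignments are used;
  both sides only depend on the values at dvars phi V E).\<close>
definition Ffun :: "mso \<Rightarrow> nat set \<Rightarrow> nat set set \<Rightarrow> (dvar \<Rightarrow> bool) \<Rightarrow> bool" where
  "Ffun \<phi> V E \<delta> \<longleftrightarrow> consistent \<phi> V E \<delta> \<and> sat V E (decode V E \<delta>) \<phi>"

text \<open>A decision diagram is represented as a term; the DAG is obtained by maximal sharing,
  so its number of nodes is the number of distinct sub-diagrams.\<close>

datatype bdd = Leaf bool | Node dvar bdd bdd

fun beval :: "bdd \<Rightarrow> (dvar \<Rightarrow> bool) \<Rightarrow> bool" where
  "beval (Leaf b) \<delta> = b"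
| "beval (Node x lo hi) \<delta> = (if \<delta> x then beval hi \<delta> else beval lo \<delta>)"

fun bvars :: "bdd \<Rightarrow> dvar set" where
  "bvars (Leaf _) = {}"
| "bvars (Node x lo hi) = insert x (bvars lo \<union> bvars hi)"

fun bnodes :: "bdd \<Rightarrow> bdd set" where
  "bnodes (Leaf b) = {Leaf b}"
| "bnodes (Node x lo hi) = insert (Node x lo hi) (bnodes lo \<union> bnodes hi)"

fun bordered :: "dvar rel \<Rightarrow> bdd \<Rightarrow> bool" where
  "bordered r (Leaf _) = True"
| "bordered r (Node x lo hi) =
     ((\<forall>y \<in> bvars lo \<union> bvars hi. (x, y) \<in> r) \<and> bordered r lo \<and> bordered r hi)"

definition obdd_computes :: "dvar set \<Rightarrow> ((dvar \<Rightarrow> bool) \<Rightarrow> bool) \<Rightarrow> bdd \<Rightarrow> bool" where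
  "obdd_computes D F t \<longleftrightarrow>
     (\<exists>r. strict_linear_order_on D r \<and> bordered r t)
     \<and> bvars t \<subseteq> D \<and> (\<forall>\<delta>. beval t \<delta> = F \<delta>)"

end

theory Submission
  imports Defs "HOL-Library.Product_Lexorder"
begin


lemma reval_proj': "i < length xs \<Longrightarrow> xs ! i = y \<Longrightarrow> reval (RProj i) xs y"
  using reval.proj by blast

lemma reval_succ': "y = Suc x \<Longrightarrow> reval RS [x] y"
  using reval.succ by blast

lemma reval_zero': "y = 0 \<Longrightarrow> reval RZ xs y"
  using reval.zero by blast

lemma reval_comp1: "reval g xs y \<Longrightarrow> reval f [y] z \<Longrightarrow> reval (RComp f [g]) xs z"
  by (rule reval.comp[where ys="[y]"]) auto

lemma reval_comp2: "reval g1 xs y1 \<Longrightarrow> reval g2 xs y2 \<Longrightarrow> reval f [y1, y2] z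
  \<Longrightarrow> reval (RComp f [g1, g2]) xs z"
  by (rule reval.comp[where ys="[y1, y2]"]) auto

lemma reval_prec:
  assumes "reval f xs (F 0)"
    and "\<And>n. reval g (n # F n # xs) (F (Suc n))"
  shows "reval (RPrec f g) (n # xs) (F n)"
  by (induction n) (auto intro: reval.intros assms)

definition r_add :: recf where "r_add = RPrec (RProj 0) (RComp RS [RProj 1])"

lemma r_add: "reval r_add [x, y] (x + y)"
  unfolding r_add_def
  by (rule reval_prec[where F="\<lambda>x. x + y", simplified])
     (auto intro!: reval_comp1 reval_proj' reval_succ')

lemma r_add': "z = x + y \<Longrightarrow> reval r_add [x, y] z" using r_add by simp

definition r_mult :: recf where "r_mult = RPrec RZ (RComp r_add [RProj 1, RProj 2])"

lemma r_mult: "reval r_mult [x, y] (x * y)"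
  unfolding r_mult_def
  by (rule reval_prec[where F="\<lambda>x. x * y", simplified])
     (auto intro!: reval_comp2 reval_proj' r_add' reval_zero')

lemma r_mult': "z = x * y \<Longrightarrow> reval r_mult [x, y] z" using r_mult by simp

definition r_pow2 :: recf where "r_pow2 = RPrec (RComp RS [RZ]) (RComp r_add [RProj 1, RProj 1])"

lemma r_pow2: "reval r_pow2 [x] (2 ^ x)"
  unfolding r_pow2_def
  by (rule reval_prec[where F="\<lambda>x. 2 ^ x", simplified])
     (auto intro!: reval_comp2 reval_comp1 reval_proj' r_add' reval_zero' reval_succ')

lemma r_pow2': "z = 2 ^ x \<Longrightarrow> reval r_pow2 [x] z" using r_pow2 by simp

fun Tb :: "nat \<Rightarrow> nat \<Rightarrow> nat" where
  "Tb b 0 = b + 3"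
| "Tb b (Suc s) = Tb b s * 2 ^ Tb b s"

definition r_T :: recf where
  "r_T = RPrec (RComp RS [RComp RS [RComp RS [RProj 0]]])
               (RComp r_mult [RProj 1, RComp r_pow2 [RProj 1]])"

lemma r_T: "reval r_T [s, b] (Tb b s)"
  unfolding r_T_def
  by (rule reval_prec[where F="\<lambda>s. Tb b s", simplified])
     (auto intro!: reval_comp2 reval_comp1 reval_proj' r_mult' r_pow2' reval_succ')

definition ff :: "nat \<Rightarrow> nat" where
  "ff k = (k + 1) * (4 ^ k * (1 + 2 ^ k * Tb (k + 1) k))"

definition r_ff :: recf where
  "r_ff = RComp r_mult [RComp RS [RProj 0],
            RComp r_mult [RComp r_pow2 [RComp r_add [RProj 0, RProj 0]],
               RComp RS [RComp r_mult [RComp r_pow2 [RProj 0],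
                   RComp r_T [RProj 0, RComp RS [RProj 0]]]]]]"

lemma computable_ff: "computable ff"
  unfolding computable_def
proof (intro exI allI)
  fix n
  have e: "(4::nat) ^ n = 2 ^ (n + n)"
    by (metis mult_2 power_mult power2_eq_square numeral_Bit0 numeral_One mult.commute
        power_add power2_eq_square) 
  show "reval r_ff [n] (ff n)"
    unfolding r_ff_def ff_def
    by (auto intro!: reval_comp2 reval_comp1 reval_proj' r_mult' r_pow2' reval_succ' r_add'
        r_T simp: e)
qed



lemma Tb_ge: "Tb b s \<ge> 3"
  by (induction s) (auto, metis le_trans mult_le_mono2 one_le_numeral one_le_power mult_1_right)

lemma Tb_mono_s: "Tb b s \<le> Tb b (Suc s)"
proof -
  have "Tb b s * 1 \<le> Tb b s * 2 ^ Tb b s" by (intro mult_le_mono2) simp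
  then show ?thesis by simp
qed

lemma Tb_mono_s': "s \<le> s' \<Longrightarrow> Tb b s \<le> Tb b s'"
  by (induction s') (auto simp: le_Suc_eq intro: le_trans[OF _ Tb_mono_s] simp del: Tb.simps)

lemma Tb_mono_b: "b \<le> b' \<Longrightarrow> Tb b s \<le> Tb b' s"
  by (induction s) (auto intro!: mult_le_mono power_increasing)

lemma le_pow2: "(n::nat) \<le> 2 ^ n"
  using less_exp[of n] by linarith

lemma bound_subset: "range h \<subseteq> S \<Longrightarrow> finite S \<Longrightarrow> card S \<le> n \<Longrightarrow> n \<le> m
  \<Longrightarrow> finite (range h) \<and> card (range h) \<le> m"
  by (meson card_mono finite_subset le_trans)

lemma card3: "finite (insert a (range (f::bool \<Rightarrow> 'a))) \<and> card (insert a (range f)) \<le> 3"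
proof -
  have "card (range f) \<le> 2" using card_image_le[of "UNIV::bool set" f] by simp
  then show ?thesis by (simp add: card_insert_if)
qed

lemma bound_img: "range h \<subseteq> F ` X \<Longrightarrow> finite X \<Longrightarrow> card X \<le> m
  \<Longrightarrow> finite (range h) \<and> card (range h) \<le> m"
  by (meson card_image_le finite_imageI card_mono finite_subset le_trans)

lemma range_sub1: "\<forall>a. r' a = F (r a) \<Longrightarrow> range r' \<subseteq> F ` range r"
  by auto

lemma range_sub2: "\<forall>a. r' a = F (r1 a, r2 a) \<Longrightarrow> range r' \<subseteq> F ` (range r1 \<times> range r2)"
  by auto

lemma range_sub3: "\<forall>a. r' a = F (H a, h a) \<Longrightarrow> (\<And>a. H a \<subseteq> R) \<Longrightarrow> (\<And>a. h a \<in> R)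
  \<Longrightarrow> range r' \<subseteq> F ` (Pow R \<times> R)"
  by (auto intro!: image_eqI)

lemma range_sub4: "\<forall>a. r' a = F (H a) \<Longrightarrow> (\<And>a. H a \<subseteq> R) \<Longrightarrow> range r' \<subseteq> F ` Pow R"
  by (auto intro!: image_eqI)

lemma pow_prod_bound: "finite R \<and> card R \<le> Tb b s \<Longrightarrow> finite (Pow R \<times> R) \<and> card (Pow R \<times> R) \<le> Tb b (Suc s)"
proof -
  assume a: "finite R \<and> card R \<le> Tb b s"
  then have "card (Pow R \<times> R) = 2 ^ card R * card R" by (simp add: card_cartesian_product card_Pow)
  also have "\<dots> \<le> 2 ^ Tb b s * Tb b s" using a by (intro mult_le_mono power_increasing) auto
  finally show ?thesis using a by (simp add: mult.commute)
qed

lemma pow_bound: "finite R \<and> card R \<le> Tb b s \<Longrightarrow> finite (Pow R) \<and> card (Pow R) \<le> Tb b (Suc s)"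
proof -
  assume a: "finite R \<and> card R \<le> Tb b s"
  then have "card (Pow R) = 2 ^ card R" by (simp add: card_Pow)
  also have "\<dots> \<le> 2 ^ Tb b s" using a by (intro power_increasing) auto
  also have "\<dots> \<le> Tb b s * 2 ^ Tb b s" using Tb_ge[of b s] by simp
  finally show ?thesis using a by simp
qed

lemma Tb_atom: "b + 3 \<le> Tb b s"
  using Tb_mono_s'[of 0 s b] by simp

definition glue :: "nat set \<Rightarrow> nat set set \<Rightarrow> asg \<Rightarrow> asg \<Rightarrow> asg" where
  "glue VL EL \<alpha> \<beta> = \<lparr> avo = (\<lambda>x. if avo \<alpha> x \<in> VL then avo \<alpha> x else avo \<beta> x),
                    aeo = (\<lambda>x. if aeo \<alpha> x \<in> EL then aeo \<alpha> x else aeo \<beta> x),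
                    avs = (\<lambda>X. (avs \<alpha> X \<inter> VL) \<union> (avs \<beta> X - VL)),
                    aes = (\<lambda>X. (aes \<alpha> X \<inter> EL) \<union> (aes \<beta> X - EL)) \<rparr>"

definition good :: "nat set \<Rightarrow> nat set set \<Rightarrow> nat set \<Rightarrow> asg \<Rightarrow> bool" where
  "good VL EL BV \<beta> \<longleftrightarrow> (\<forall>x. avo \<beta> x \<notin> VL) \<and> (\<forall>x. aeo \<beta> x \<notin> EL \<and> aeo \<beta> x \<inter> VL \<subseteq> BV)"

definition res :: "nat set \<Rightarrow> nat set set \<Rightarrow> nat set \<Rightarrow> nat set set \<Rightarrow> nat set \<Rightarrow> mso \<Rightarrow> asg \<Rightarrow> asg \<Rightarrow> bool" where
  "res V E VL EL BV \<psi> \<alpha> = (\<lambda>\<beta>. good VL EL BV \<beta> \<and> sat V E (glue VL EL \<alpha> \<beta>) \<psi>)"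

lemma card_prod_le: "finite A \<Longrightarrow> finite B \<Longrightarrow> card A \<le> a \<Longrightarrow> card B \<le> b \<Longrightarrow> card (A \<times> B) \<le> a * b"
  by (simp add: card_cartesian_product mult_le_mono)

lemma res_bound:
  assumes A1: "\<forall>e\<in>EL. e \<subseteq> VL" and A2: "\<forall>e\<in>E - EL. e \<inter> VL \<subseteq> BV" and fin: "finite BV"
  shows "finite (range (res V E VL EL BV \<psi>)) \<and> card (range (res V E VL EL BV \<psi>)) \<le> Tb (card BV) (msize \<psi>)"
proof (induction \<psi>)
  case (Adj x e)
  let ?g = "good VL EL BV"
  let ?S = "(\<lambda>c \<beta>. ?g \<beta> \<and> c) ` UNIV \<union> {\<lambda>\<beta>. ?g \<beta> \<and> avo \<beta> x \<in> aeo \<beta> e}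
     \<union> (\<lambda>v \<beta>. ?g \<beta> \<and> v \<in> aeo \<beta> e) ` BV"
  have "range (res V E VL EL BV (Adj x e)) \<subseteq> ?S"
  proof
    fix h assume "h \<in> range (res V E VL EL BV (Adj x e))"
    then obtain \<alpha> where h: "h = res V E VL EL BV (Adj x e) \<alpha>" by auto
    show "h \<in> ?S"
    proof (cases "avo \<alpha> x \<in> VL")
      case xin: True
      show ?thesis
      proof (cases "aeo \<alpha> e \<in> EL")
        case True
        then have "h = (\<lambda>\<beta>. ?g \<beta> \<and> avo \<alpha> x \<in> aeo \<alpha> e)"
          using xin unfolding h res_def glue_def by auto
        then show ?thesis by auto
      next
        case False
        show ?thesis
        proof (cases "avo \<alpha> x \<in> BV")
          case True
          then have "h = (\<lambda>\<beta>. ?g \<beta> \<and> avo \<alpha> x \<in> aeo \<beta> e)"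
            using xin False unfolding h res_def glue_def by auto
          then show ?thesis using True by auto
        next
          case nb: False
          then have "h = (\<lambda>\<beta>. ?g \<beta> \<and> False)"
            using xin False unfolding h res_def glue_def good_def by (auto simp: fun_eq_iff)
          then show ?thesis by auto
        qed
      qed
    next
      case xout: False
      show ?thesis
      proof (cases "aeo \<alpha> e \<in> EL")
        case True
        then have "h = (\<lambda>\<beta>. ?g \<beta> \<and> False)"
          using xout A1 unfolding h res_def glue_def good_def by (auto simp: fun_eq_iff)
        then show ?thesis by auto
      next
        case False
        then have "h = (\<lambda>\<beta>. ?g \<beta> \<and> avo \<beta> x \<in> aeo \<beta> e)"
          using xout unfolding h res_def glue_def good_def by (auto simp: fun_eq_iff)
        then show ?thesis by auto
      qed
    qed
  qed
  moreover have "finite ?S" using fin by auto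
  moreover have "card ?S \<le> card BV + 3"
  proof -
    have "card ?S \<le> card ((\<lambda>c \<beta>. ?g \<beta> \<and> c) ` UNIV \<union> {\<lambda>\<beta>. ?g \<beta> \<and> avo \<beta> x \<in> aeo \<beta> e})
       + card ((\<lambda>v \<beta>. ?g \<beta> \<and> v \<in> aeo \<beta> e) ` BV)" by (rule card_Un_le)
    also have "\<dots> \<le> (card ((\<lambda>c \<beta>. ?g \<beta> \<and> c) ` (UNIV::bool set)) + 1) + card BV"
      by (intro add_mono card_image_le fin) (simp add: card_insert_le_m1 card_Un_le)
    also have "\<dots> \<le> (2 + 1) + card BV"
      using card_image_le[of "UNIV::bool set" "\<lambda>c \<beta>. ?g \<beta> \<and> c"] by simp
    finally show ?thesis by simp
  qed
  ultimately show ?case by (intro bound_subset[of _ ?S]) (auto simp: Tb_atom add.commute)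
next
  case (EqV x y)
  let ?g = "good VL EL BV"
  have "res V E VL EL BV (EqV x y) \<alpha> = (if avo \<alpha> x \<in> VL \<and> avo \<alpha> y \<in> VL then (\<lambda>\<beta>. ?g \<beta> \<and> avo \<alpha> x = avo \<alpha> y)
     else if avo \<alpha> x \<in> VL \<or> avo \<alpha> y \<in> VL then (\<lambda>\<beta>. ?g \<beta> \<and> False) else (\<lambda>\<beta>. ?g \<beta> \<and> avo \<beta> x = avo \<beta> y))" for \<alpha>
    unfolding res_def glue_def good_def by (auto simp: fun_eq_iff; metis)
  then have "range (res V E VL EL BV (EqV x y)) \<subseteq> insert (\<lambda>\<beta>. ?g \<beta> \<and> avo \<beta> x = avo \<beta> y) (range (\<lambda>c \<beta>. ?g \<beta> \<and> c))"
    by auto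
  then show ?case by (rule bound_subset[where n=3]) (auto simp: card3 Tb_ge)
next
  case (EqE x y)
  let ?g = "good VL EL BV"
  have "res V E VL EL BV (EqE x y) \<alpha> = (if aeo \<alpha> x \<in> EL \<and> aeo \<alpha> y \<in> EL then (\<lambda>\<beta>. ?g \<beta> \<and> aeo \<alpha> x = aeo \<alpha> y)
     else if aeo \<alpha> x \<in> EL \<or> aeo \<alpha> y \<in> EL then (\<lambda>\<beta>. ?g \<beta> \<and> False) else (\<lambda>\<beta>. ?g \<beta> \<and> aeo \<beta> x = aeo \<beta> y))" for \<alpha>
    unfolding res_def glue_def good_def by (auto simp: fun_eq_iff; metis)
  then have "range (res V E VL EL BV (EqE x y)) \<subseteq> insert (\<lambda>\<beta>. ?g \<beta> \<and> aeo \<beta> x = aeo \<beta> y) (range (\<lambda>c \<beta>. ?g \<beta> \<and> c))"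
    by auto
  then show ?case by (rule bound_subset[where n=3]) (auto simp: card3 Tb_ge)
next
  case (InV x X)
  let ?g = "good VL EL BV"
  have "res V E VL EL BV (InV x X) \<alpha> = (if avo \<alpha> x \<in> VL then (\<lambda>\<beta>. ?g \<beta> \<and> avo \<alpha> x \<in> avs \<alpha> X)
     else (\<lambda>\<beta>. ?g \<beta> \<and> avo \<beta> x \<in> avs \<beta> X))" for \<alpha>
    unfolding res_def glue_def good_def by (auto simp: fun_eq_iff; metis)
  then have "range (res V E VL EL BV (InV x X)) \<subseteq> insert (\<lambda>\<beta>. ?g \<beta> \<and> avo \<beta> x \<in> avs \<beta> X) (range (\<lambda>c \<beta>. ?g \<beta> \<and> c))"
    by auto
  then show ?case by (rule bound_subset[where n=3]) (auto simp: card3 Tb_ge)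
next
  case (InE x X)
  let ?g = "good VL EL BV"
  have "res V E VL EL BV (InE x X) \<alpha> = (if aeo \<alpha> x \<in> EL then (\<lambda>\<beta>. ?g \<beta> \<and> aeo \<alpha> x \<in> aes \<alpha> X)
     else (\<lambda>\<beta>. ?g \<beta> \<and> aeo \<beta> x \<in> aes \<beta> X))" for \<alpha>
    unfolding res_def glue_def good_def by (auto simp: fun_eq_iff; metis)
  then have "range (res V E VL EL BV (InE x X)) \<subseteq> insert (\<lambda>\<beta>. ?g \<beta> \<and> aeo \<beta> x \<in> aes \<beta> X) (range (\<lambda>c \<beta>. ?g \<beta> \<and> c))"
    by auto
  then show ?case by (rule bound_subset[where n=3]) (auto simp: card3 Tb_ge)
next
  case (Neg \<psi>)
  let ?g = "good VL EL BV"
  define F where "F = (\<lambda>h \<beta>. ?g \<beta> \<and> \<not> h \<beta>)"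
  have "\<forall>\<alpha>. res V E VL EL BV (Neg \<psi>) \<alpha> = F (res V E VL EL BV \<psi> \<alpha>)"
    by (auto simp: res_def fun_eq_iff F_def)
  then have "range (res V E VL EL BV (Neg \<psi>)) \<subseteq> F ` range (res V E VL EL BV \<psi>)"
    by (auto simp: image_iff)
  then show ?case using Neg
    by (intro bound_img) (auto intro: le_trans[OF _ Tb_mono_s] simp del: Tb.simps)
next
  case (Conj \<psi>1 \<psi>2)
  define F :: "(asg \<Rightarrow> bool) \<times> (asg \<Rightarrow> bool) \<Rightarrow> asg \<Rightarrow> bool" where "F = (\<lambda>(h1, h2) \<beta>. h1 \<beta> \<and> h2 \<beta>)"
  have "\<forall>\<alpha>. res V E VL EL BV (Conj \<psi>1 \<psi>2) \<alpha> = F (res V E VL EL BV \<psi>1 \<alpha>, res V E VL EL BV \<psi>2 \<alpha>)"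
    by (auto simp: res_def fun_eq_iff F_def)
  then have "range (res V E VL EL BV (Conj \<psi>1 \<psi>2)) \<subseteq> F ` (range (res V E VL EL BV \<psi>1) \<times> range (res V E VL EL BV \<psi>2))"
    by (auto simp: image_iff)
  moreover have "card (range (res V E VL EL BV \<psi>1) \<times> range (res V E VL EL BV \<psi>2)) \<le> Tb (card BV) (msize (Conj \<psi>1 \<psi>2))"
  proof -
    let ?s = "msize \<psi>1 + msize \<psi>2"
    have "card (range (res V E VL EL BV \<psi>1) \<times> range (res V E VL EL BV \<psi>2)) \<le> Tb (card BV) ?s * Tb (card BV) ?s"
      using Conj Tb_mono_s'[of "msize \<psi>1" ?s "card BV"] Tb_mono_s'[of "msize \<psi>2" ?s "card BV"]
      by (intro card_prod_le) auto
    also have "\<dots> \<le> Tb (card BV) ?s * 2 ^ Tb (card BV) ?s"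
      by (intro mult_le_mono2 le_pow2)
    finally show ?thesis by simp
  qed
  ultimately show ?case using Conj by (intro bound_img) auto
next
  case (ExVO x \<psi>)
  let ?g = "good VL EL BV"
  let ?upd = "\<lambda>a v. a\<lparr>avo := (avo a)(x := v)\<rparr>"
  define v0 where "v0 = (SOME v. v \<in> V - VL)"
  define F where "F = (\<lambda>(H, h0) \<beta>. ?g \<beta> \<and> ((\<exists>h\<in>H. h \<beta>) \<or> (\<exists>v\<in>V-VL. h0 (?upd \<beta> v))))"
  have "\<forall>\<alpha>. res V E VL EL BV (ExVO x \<psi>) \<alpha> = F ((\<lambda>v. res V E VL EL BV \<psi> (?upd \<alpha> v)) ` (V \<inter> VL), res V E VL EL BV \<psi> (?upd \<alpha> v0))"
  proof (intro allI ext)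
    fix \<alpha> \<beta>
    show "res V E VL EL BV (ExVO x \<psi>) \<alpha> \<beta> = F ((\<lambda>v. res V E VL EL BV \<psi> (?upd \<alpha> v)) ` (V \<inter> VL), res V E VL EL BV \<psi> (?upd \<alpha> v0)) \<beta>"
    proof (cases "?g \<beta>")
      case False then show ?thesis by (simp add: res_def F_def)
    next
      case True
      have 1: "v \<in> VL \<Longrightarrow> glue VL EL (?upd \<alpha> v) \<beta> = ?upd (glue VL EL \<alpha> \<beta>) v" for v
        by (auto simp: glue_def fun_eq_iff)
      have 2: "v \<notin> VL \<Longrightarrow> v0 \<notin> VL \<Longrightarrow> glue VL EL (?upd \<alpha> v0) (?upd \<beta> v) = ?upd (glue VL EL \<alpha> \<beta>) v" for v
        by (auto simp: glue_def fun_eq_iff)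
      have 3: "v \<notin> VL \<Longrightarrow> ?g (?upd \<beta> v)" for v using True by (simp add: good_def)
      have "(\<exists>v\<in>V. sat V E (?upd (glue VL EL \<alpha> \<beta>) v) \<psi>) =
        ((\<exists>v\<in>V \<inter> VL. res V E VL EL BV \<psi> (?upd \<alpha> v) \<beta>) \<or> (\<exists>v\<in>V-VL. res V E VL EL BV \<psi> (?upd \<alpha> v0) (?upd \<beta> v)))"
      proof (cases "V - VL = {}")
        case True
        then show ?thesis using 1 \<open>?g \<beta>\<close> by (auto simp: res_def)
      next
        case False
        then have "v0 \<in> V - VL" unfolding v0_def by (metis all_not_in_conv someI_ex)
        then show ?thesis using 1 2 3 \<open>?g \<beta>\<close> by (auto simp: res_def)
      qed
      then show ?thesis using True by (simp add: res_def F_def)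
    qed
  qed
  then have "range (res V E VL EL BV (ExVO x \<psi>)) \<subseteq> F ` (Pow (range (res V E VL EL BV \<psi>)) \<times> range (res V E VL EL BV \<psi>))"
    by (rule range_sub3) auto
  moreover have "finite (Pow (range (res V E VL EL BV \<psi>)) \<times> range (res V E VL EL BV \<psi>)) \<and> card (Pow (range (res V E VL EL BV \<psi>)) \<times> range (res V E VL EL BV \<psi>)) \<le> Tb (card BV) (msize (ExVO x \<psi>))"
    using pow_prod_bound[OF ExVO] by simp
  ultimately show ?case by (meson bound_img)
next
  case (ExEO x \<psi>)
  let ?g = "good VL EL BV"
  let ?upd = "\<lambda>a v. a\<lparr>aeo := (aeo a)(x := v)\<rparr>"
  define v0 where "v0 = (SOME v. v \<in> E - EL)"
  define F where "F = (\<lambda>(H, h0) \<beta>. ?g \<beta> \<and> ((\<exists>h\<in>H. h \<beta>) \<or> (\<exists>v\<in>E-EL. h0 (?upd \<beta> v))))"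
  have "\<forall>\<alpha>. res V E VL EL BV (ExEO x \<psi>) \<alpha> = F ((\<lambda>v. res V E VL EL BV \<psi> (?upd \<alpha> v)) ` (E \<inter> EL), res V E VL EL BV \<psi> (?upd \<alpha> v0))"
  proof (intro allI ext)
    fix \<alpha> \<beta>
    show "res V E VL EL BV (ExEO x \<psi>) \<alpha> \<beta> = F ((\<lambda>v. res V E VL EL BV \<psi> (?upd \<alpha> v)) ` (E \<inter> EL), res V E VL EL BV \<psi> (?upd \<alpha> v0)) \<beta>"
    proof (cases "?g \<beta>")
      case False then show ?thesis by (simp add: res_def F_def)
    next
      case True
      have 1: "v \<in> EL \<Longrightarrow> glue VL EL (?upd \<alpha> v) \<beta> = ?upd (glue VL EL \<alpha> \<beta>) v" for v
        by (auto simp: glue_def fun_eq_iff)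
      have 2: "v \<notin> EL \<Longrightarrow> v0 \<notin> EL \<Longrightarrow> glue VL EL (?upd \<alpha> v0) (?upd \<beta> v) = ?upd (glue VL EL \<alpha> \<beta>) v" for v
        by (auto simp: glue_def fun_eq_iff)
      have 3: "v \<in> E - EL \<Longrightarrow> ?g (?upd \<beta> v)" for v using True A2 by (simp add: good_def)
      have "(\<exists>v\<in>E. sat V E (?upd (glue VL EL \<alpha> \<beta>) v) \<psi>) =
        ((\<exists>v\<in>E \<inter> EL. res V E VL EL BV \<psi> (?upd \<alpha> v) \<beta>) \<or> (\<exists>v\<in>E-EL. res V E VL EL BV \<psi> (?upd \<alpha> v0) (?upd \<beta> v)))"
      proof (cases "E - EL = {}")
        case True
        then show ?thesis using 1 \<open>?g \<beta>\<close> by (auto simp: res_def)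
      next
        case False
        then have "v0 \<in> E - EL" unfolding v0_def by (metis all_not_in_conv someI_ex)
        then show ?thesis using 1 2 3 \<open>?g \<beta>\<close> by (auto simp: res_def)
      qed
      then show ?thesis using True by (simp add: res_def F_def)
    qed
  qed
  then have "range (res V E VL EL BV (ExEO x \<psi>)) \<subseteq> F ` (Pow (range (res V E VL EL BV \<psi>)) \<times> range (res V E VL EL BV \<psi>))"
    by (rule range_sub3) auto
  moreover have "finite (Pow (range (res V E VL EL BV \<psi>)) \<times> range (res V E VL EL BV \<psi>)) \<and> card (Pow (range (res V E VL EL BV \<psi>)) \<times> range (res V E VL EL BV \<psi>)) \<le> Tb (card BV) (msize (ExEO x \<psi>))"
    using pow_prod_bound[OF ExEO] by simp
  ultimately show ?case by (meson bound_img)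
next
  case (ExVS X \<psi>)
  let ?g = "good VL EL BV"
  let ?upd = "\<lambda>a S. a\<lparr>avs := (avs a)(X := S)\<rparr>"
  define F where "F = (\<lambda>H \<beta>. ?g \<beta> \<and> (\<exists>h\<in>H. \<exists>S2. S2 \<subseteq> V - VL \<and> h (?upd \<beta> S2)))"
  have "\<forall>\<alpha>. res V E VL EL BV (ExVS X \<psi>) \<alpha> = F ((\<lambda>S. res V E VL EL BV \<psi> (?upd \<alpha> S)) ` Pow (V \<inter> VL))"
  proof (intro allI ext)
    fix \<alpha> \<beta>
    have 1: "glue VL EL (?upd \<alpha> S1) (?upd \<beta> S2) = ?upd (glue VL EL \<alpha> \<beta>) ((S1 \<inter> VL) \<union> (S2 - VL))" for S1 S2
      by (auto simp: glue_def fun_eq_iff)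
    have 2: "?g (?upd \<beta> S) = ?g \<beta>" for S by (simp add: good_def)
    have "(\<exists>S\<subseteq>V. sat V E (?upd (glue VL EL \<alpha> \<beta>) S) \<psi>) =
       (\<exists>S1\<subseteq>V \<inter> VL. \<exists>S2. S2 \<subseteq> V - VL \<and> sat V E (?upd (glue VL EL \<alpha> \<beta>) ((S1 \<inter> VL) \<union> (S2 - VL))) \<psi>)"
    proof
      assume "\<exists>S\<subseteq>V. sat V E (?upd (glue VL EL \<alpha> \<beta>) S) \<psi>"
      then obtain S where S: "S \<subseteq> V" "sat V E (?upd (glue VL EL \<alpha> \<beta>) S) \<psi>" by blast
      have e: "((S \<inter> VL) \<inter> VL) \<union> ((S - VL) - VL) = S" by auto
      show "\<exists>S1\<subseteq>V \<inter> VL. \<exists>S2. S2 \<subseteq> V - VL \<and> sat V E (?upd (glue VL EL \<alpha> \<beta>) ((S1 \<inter> VL) \<union> (S2 - VL))) \<psi>"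
        by (rule exI[of _ "S \<inter> VL"], rule conjI, use S in blast, rule exI[of _ "S - VL"], simp only: e, use S in blast)
    next
      assume "\<exists>S1\<subseteq>V \<inter> VL. \<exists>S2. S2 \<subseteq> V - VL \<and> sat V E (?upd (glue VL EL \<alpha> \<beta>) ((S1 \<inter> VL) \<union> (S2 - VL))) \<psi>"
      then obtain S1 S2 where "S1 \<subseteq> V \<inter> VL" "S2 \<subseteq> V - VL" "sat V E (?upd (glue VL EL \<alpha> \<beta>) ((S1 \<inter> VL) \<union> (S2 - VL))) \<psi>"
        by blast
      then show "\<exists>S\<subseteq>V. sat V E (?upd (glue VL EL \<alpha> \<beta>) S) \<psi>"
        by (intro exI[of _ "(S1 \<inter> VL) \<union> (S2 - VL)"]) auto
    qed
    then show "res V E VL EL BV (ExVS X \<psi>) \<alpha> \<beta> = F ((\<lambda>S. res V E VL EL BV \<psi> (?upd \<alpha> S)) ` Pow (V \<inter> VL)) \<beta>"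
      by (simp add: res_def F_def 1 2) blast
  qed
  then have "range (res V E VL EL BV (ExVS X \<psi>)) \<subseteq> F ` (Pow (range (res V E VL EL BV \<psi>)))"
    by (rule range_sub4) auto
  moreover have "finite (Pow (range (res V E VL EL BV \<psi>))) \<and> card (Pow (range (res V E VL EL BV \<psi>))) \<le> Tb (card BV) (msize (ExVS X \<psi>))"
    using pow_bound[OF ExVS] by simp
  ultimately show ?case by (meson bound_img)
next
  case (ExES X \<psi>)
  let ?g = "good VL EL BV"
  let ?upd = "\<lambda>a S. a\<lparr>aes := (aes a)(X := S)\<rparr>"
  define F where "F = (\<lambda>H \<beta>. ?g \<beta> \<and> (\<exists>h\<in>H. \<exists>S2. S2 \<subseteq> E - EL \<and> h (?upd \<beta> S2)))"
  have "\<forall>\<alpha>. res V E VL EL BV (ExES X \<psi>) \<alpha> = F ((\<lambda>S. res V E VL EL BV \<psi> (?upd \<alpha> S)) ` Pow (E \<inter> EL))"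
  proof (intro allI ext)
    fix \<alpha> \<beta>
    have 1: "glue VL EL (?upd \<alpha> S1) (?upd \<beta> S2) = ?upd (glue VL EL \<alpha> \<beta>) ((S1 \<inter> EL) \<union> (S2 - EL))" for S1 S2
      by (auto simp: glue_def fun_eq_iff)
    have 2: "?g (?upd \<beta> S) = ?g \<beta>" for S by (simp add: good_def)
    have "(\<exists>S\<subseteq>E. sat V E (?upd (glue VL EL \<alpha> \<beta>) S) \<psi>) =
       (\<exists>S1\<subseteq>E \<inter> EL. \<exists>S2. S2 \<subseteq> E - EL \<and> sat V E (?upd (glue VL EL \<alpha> \<beta>) ((S1 \<inter> EL) \<union> (S2 - EL))) \<psi>)"
    proof
      assume "\<exists>S\<subseteq>E. sat V E (?upd (glue VL EL \<alpha> \<beta>) S) \<psi>"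
      then obtain S where S: "S \<subseteq> E" "sat V E (?upd (glue VL EL \<alpha> \<beta>) S) \<psi>" by blast
      have e: "((S \<inter> EL) \<inter> EL) \<union> ((S - EL) - EL) = S" by auto
      show "\<exists>S1\<subseteq>E \<inter> EL. \<exists>S2. S2 \<subseteq> E - EL \<and> sat V E (?upd (glue VL EL \<alpha> \<beta>) ((S1 \<inter> EL) \<union> (S2 - EL))) \<psi>"
        by (rule exI[of _ "S \<inter> EL"], rule conjI, use S in blast, rule exI[of _ "S - EL"], simp only: e, use S in blast)
    next
      assume "\<exists>S1\<subseteq>E \<inter> EL. \<exists>S2. S2 \<subseteq> E - EL \<and> sat V E (?upd (glue VL EL \<alpha> \<beta>) ((S1 \<inter> EL) \<union> (S2 - EL))) \<psi>"
      then obtain S1 S2 where "S1 \<subseteq> E \<inter> EL" "S2 \<subseteq> E - EL" "sat V E (?upd (glue VL EL \<alpha> \<beta>) ((S1 \<inter> EL) \<union> (S2 - EL))) \<psi>"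
        by blast
      then show "\<exists>S\<subseteq>E. sat V E (?upd (glue VL EL \<alpha> \<beta>) S) \<psi>"
        by (intro exI[of _ "(S1 \<inter> EL) \<union> (S2 - EL)"]) auto
    qed
    then show "res V E VL EL BV (ExES X \<psi>) \<alpha> \<beta> = F ((\<lambda>S. res V E VL EL BV \<psi> (?upd \<alpha> S)) ` Pow (E \<inter> EL)) \<beta>"
      by (simp add: res_def F_def 1 2) blast
  qed
  then have "range (res V E VL EL BV (ExES X \<psi>)) \<subseteq> F ` (Pow (range (res V E VL EL BV \<psi>)))"
    by (rule range_sub4) auto
  moreover have "finite (Pow (range (res V E VL EL BV \<psi>))) \<and> card (Pow (range (res V E VL EL BV \<psi>))) \<le> Tb (card BV) (msize (ExES X \<psi>))"
    using pow_bound[OF ExES] by simp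
  ultimately show ?case by (meson bound_img)
qed



lemma sat_agree:
  "(\<forall>x\<in>fvo \<phi>. avo a x = avo a' x) \<Longrightarrow> (\<forall>x\<in>feo \<phi>. aeo a x = aeo a' x)
   \<Longrightarrow> (\<forall>X\<in>fvs \<phi>. avs a X = avs a' X) \<Longrightarrow> (\<forall>X\<in>fes \<phi>. aes a X = aes a' X)
   \<Longrightarrow> sat V E a \<phi> = sat V E a' \<phi>"
proof (induction \<phi> arbitrary: a a')
  case (ExVO x \<phi>)
  have "sat V E (a\<lparr>avo := (avo a)(x := v)\<rparr>) \<phi> = sat V E (a'\<lparr>avo := (avo a')(x := v)\<rparr>) \<phi>" for v
    using ExVO.prems by (intro ExVO.IH) auto
  then show ?case by simp
next
  case (ExEO x \<phi>)
  have "sat V E (a\<lparr>aeo := (aeo a)(x := v)\<rparr>) \<phi> = sat V E (a'\<lparr>aeo := (aeo a')(x := v)\<rparr>) \<phi>" for v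
    using ExEO.prems by (intro ExEO.IH) auto
  then show ?case by simp
next
  case (ExVS x \<phi>)
  have "sat V E (a\<lparr>avs := (avs a)(x := v)\<rparr>) \<phi> = sat V E (a'\<lparr>avs := (avs a')(x := v)\<rparr>) \<phi>" for v
    using ExVS.prems by (intro ExVS.IH) auto
  then show ?case by simp
next
  case (ExES x \<phi>)
  have "sat V E (a\<lparr>aes := (aes a)(x := v)\<rparr>) \<phi> = sat V E (a'\<lparr>aes := (aes a')(x := v)\<rparr>) \<phi>" for v
    using ExES.prems by (intro ExES.IH) auto
  then show ?case by simp
next
  case (Conj p q)
  then show ?case by (metis UnCI fvo.simps(7) feo.simps(7) fvs.simps(7) fes.simps(7) sat.simps(7))
qed auto

lemma fv_card:
  "finite (fvo \<phi>) \<and> finite (feo \<phi>) \<and> finite (fvs \<phi>) \<and> finite (fes \<phi>) \<and>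
   card (fvo \<phi>) + card (feo \<phi>) + card (fvs \<phi>) + card (fes \<phi>) \<le> msize \<phi>"
proof (induction \<phi>)
  case (EqV x y) then show ?case by (simp add: card_insert_if)
next
  case (EqE x y) then show ?case by (simp add: card_insert_if)
next
  case (Conj p q)
  then show ?case
    using card_Un_le[of "fvo p" "fvo q"] card_Un_le[of "feo p" "feo q"]
      card_Un_le[of "fvs p" "fvs q"] card_Un_le[of "fes p" "fes q"] by simp
next
  case (ExVO x p) then show ?case using card_Diff1_le[of "fvo p" x] by simp
next
  case (ExEO x p) then show ?case using card_Diff1_le[of "feo p" x] by simp
next
  case (ExVS x p) then show ?case using card_Diff1_le[of "fvs p" x] by simp
next
  case (ExES x p) then show ?case using card_Diff1_le[of "fes p" x] by simp
qed auto

definition ovr :: "dvar set \<Rightarrow> (dvar \<Rightarrow> bool) \<Rightarrow> (dvar \<Rightarrow> bool) \<Rightarrow> dvar \<Rightarrow> bool" where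
  "ovr S \<delta> \<sigma> = (\<lambda>d. if d \<in> S then \<delta> d else \<sigma> d)"

lemma Ffun_local:
  assumes "\<forall>d\<in>dvars \<phi> V E. \<delta> d = \<delta>' d"
  shows "Ffun \<phi> V E \<delta> = Ffun \<phi> V E \<delta>'"
proof -
  have h1: "\<forall>x\<in>fvo \<phi>. \<forall>v\<in>V. \<delta> (DVO x v) = \<delta>' (DVO x v)"
    and h2: "\<forall>x\<in>feo \<phi>. \<forall>v\<in>E. \<delta> (DEO x v) = \<delta>' (DEO x v)"
    using assms by (auto simp: dvars_def)
  have "(\<exists>!v. v \<in> V \<and> \<delta> (DVO x v)) = (\<exists>!v. v \<in> V \<and> \<delta>' (DVO x v))" if "x \<in> fvo \<phi>" for x
    using h1 that by (intro arg_cong[where f=Ex1] ext) auto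
  moreover have "(\<exists>!v. v \<in> E \<and> \<delta> (DEO x v)) = (\<exists>!v. v \<in> E \<and> \<delta>' (DEO x v))" if "x \<in> feo \<phi>" for x
    using h2 that by (intro arg_cong[where f=Ex1] ext) auto
  ultimately have c: "consistent \<phi> V E \<delta> = consistent \<phi> V E \<delta>'"
    unfolding consistent_def by auto
  have s: "sat V E (decode V E \<delta>) \<phi> = sat V E (decode V E \<delta>') \<phi>"
  proof (rule sat_agree)
    have "(THE v. v \<in> V \<and> \<delta> (DVO x v)) = (THE v. v \<in> V \<and> \<delta>' (DVO x v))" if "x \<in> fvo \<phi>" for x
      using h1 that by (intro arg_cong[where f=The] ext) auto
    then show "\<forall>x\<in>fvo \<phi>. avo (decode V E \<delta>) x = avo (decode V E \<delta>') x" by (simp add: decode_def)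
    have "(THE v. v \<in> E \<and> \<delta> (DEO x v)) = (THE v. v \<in> E \<and> \<delta>' (DEO x v))" if "x \<in> feo \<phi>" for x
      using h2 that by (intro arg_cong[where f=The] ext) auto
    then show "\<forall>x\<in>feo \<phi>. aeo (decode V E \<delta>) x = aeo (decode V E \<delta>') x" by (simp add: decode_def)
  qed (use assms in \<open>auto simp: decode_def dvars_def\<close>)
  show ?thesis unfolding Ffun_def c s ..
qed

lemma exu_split:
  assumes "A \<inter> B = {}" "\<forall>v1\<in>A. \<forall>v2\<in>A. P v1 \<and> P v2 \<longrightarrow> v1 = v2"
  shows "(\<exists>!v. v \<in> A \<union> B \<and> P v) = (if \<exists>v\<in>A. P v then \<forall>v\<in>B. \<not> P v else (\<exists>!v. v \<in> B \<and> P v))"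
  using assms by (auto; blast)

lemma cut_bound:
  fixes V :: "nat set" and E :: "nat set set" and \<phi> :: mso
  assumes gV: "finite V" and Enz: "{} \<notin> E"
    and VL: "VL \<subseteq> V" and EL: "EL \<subseteq> E" and A1: "\<forall>e\<in>EL. e \<subseteq> VL"
    and BV: "BV = VL \<inter> \<Union>(E - EL)"
    and PL: "PL = {DVO x v | x v. x \<in> fvo \<phi> \<and> v \<in> VL} \<union> {DEO x e | x e. x \<in> feo \<phi> \<and> e \<in> EL}
       \<union> {DVS X v | X v. X \<in> fvs \<phi> \<and> v \<in> VL} \<union> {DES X e | X e. X \<in> fes \<phi> \<and> e \<in> EL}"
  shows "finite (range (\<lambda>\<delta> \<sigma>. Ffun \<phi> V E (ovr PL \<delta> \<sigma>))) \<and>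
    card (range (\<lambda>\<delta> \<sigma>. Ffun \<phi> V E (ovr PL \<delta> \<sigma>))) \<le> 1 + 2 ^ (card (fvo \<phi>) + card (feo \<phi>)) * Tb (card BV) (msize \<phi>)"
proof -
  define dV where "dV = (SOME v::nat. v \<notin> V)"
  have dV: "dV \<notin> V" using ex_new_if_finite[OF infinite_UNIV_nat gV] unfolding dV_def by (metis someI_ex)
  define al where "al \<delta> = \<lparr> avo = \<lambda>x. if \<exists>!v. v \<in> VL \<and> \<delta> (DVO x v) then (THE v. v \<in> VL \<and> \<delta> (DVO x v)) else dV,
       aeo = \<lambda>x. if \<exists>!e. e \<in> EL \<and> \<delta> (DEO x e) then (THE e. e \<in> EL \<and> \<delta> (DEO x e)) else {},
       avs = \<lambda>X. {v\<in>VL. \<delta> (DVS X v)}, aes = \<lambda>X. {e\<in>EL. \<delta> (DES X e)} \<rparr>" for \<delta>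
  define be where "be \<sigma> = \<lparr> avo = \<lambda>x. if \<exists>!v. v \<in> V - VL \<and> \<sigma> (DVO x v) then (THE v. v \<in> V - VL \<and> \<sigma> (DVO x v)) else dV,
       aeo = \<lambda>x. if \<exists>!e. e \<in> E - EL \<and> \<sigma> (DEO x e) then (THE e. e \<in> E - EL \<and> \<sigma> (DEO x e)) else {},
       avs = \<lambda>X. {v\<in>V - VL. \<sigma> (DVS X v)}, aes = \<lambda>X. {e\<in>E - EL. \<sigma> (DES X e)} \<rparr>" for \<sigma>
  define bad where "bad \<delta> = ((\<exists>x\<in>fvo \<phi>. \<exists>v1\<in>VL. \<exists>v2\<in>VL. v1 \<noteq> v2 \<and> \<delta> (DVO x v1) \<and> \<delta> (DVO x v2))
     \<or> (\<exists>x\<in>feo \<phi>. \<exists>v1\<in>EL. \<exists>v2\<in>EL. v1 \<noteq> v2 \<and> \<delta> (DEO x v1) \<and> \<delta> (DEO x v2)))" for \<delta>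
  define lsV where "lsV \<delta> = {x\<in>fvo \<phi>. \<exists>v\<in>VL. \<delta> (DVO x v)}" for \<delta>
  define lsE where "lsE \<delta> = {x\<in>feo \<phi>. \<exists>v\<in>EL. \<delta> (DEO x v)}" for \<delta>
  define consR where "consR A B \<sigma> = ((\<forall>x\<in>fvo \<phi>. if x \<in> A then (\<forall>v\<in>V-VL. \<not> \<sigma> (DVO x v)) else (\<exists>!v. v \<in> V - VL \<and> \<sigma> (DVO x v)))
      \<and> (\<forall>x\<in>feo \<phi>. if x \<in> B then (\<forall>v\<in>E-EL. \<not> \<sigma> (DEO x v)) else (\<exists>!v. v \<in> E - EL \<and> \<sigma> (DEO x v))))" for A B \<sigma>
  define Psi where "Psi = (\<lambda>(A, B, h). \<lambda>\<sigma>. consR A B \<sigma> \<and> h (be \<sigma>))"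
  have key: "(\<lambda>\<sigma>. Ffun \<phi> V E (ovr PL \<delta> \<sigma>)) =
     (if bad \<delta> then (\<lambda>\<sigma>. False) else Psi (lsV \<delta>, lsE \<delta>, res V E VL EL BV \<phi> (al \<delta>)))" for \<delta>
  proof (rule ext)
    fix \<sigma>
    define \<delta>' where "\<delta>' = ovr PL \<delta> \<sigma>"
    have dVO: "\<delta>' (DVO x v) = (if v \<in> VL then \<delta> (DVO x v) else \<sigma> (DVO x v))" if "x \<in> fvo \<phi>" for x v
      using that by (auto simp: \<delta>'_def ovr_def PL)
    have dEO: "\<delta>' (DEO x v) = (if v \<in> EL then \<delta> (DEO x v) else \<sigma> (DEO x v))" if "x \<in> feo \<phi>" for x v
      using that by (auto simp: \<delta>'_def ovr_def PL)
    have dVS: "\<delta>' (DVS x v) = (if v \<in> VL then \<delta> (DVS x v) else \<sigma> (DVS x v))" if "x \<in> fvs \<phi>" for x v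
      using that by (auto simp: \<delta>'_def ovr_def PL)
    have dES: "\<delta>' (DES x v) = (if v \<in> EL then \<delta> (DES x v) else \<sigma> (DES x v))" if "x \<in> fes \<phi>" for x v
      using that by (auto simp: \<delta>'_def ovr_def PL)
    show "Ffun \<phi> V E \<delta>' = (if bad \<delta> then (\<lambda>\<sigma>. False) else Psi (lsV \<delta>, lsE \<delta>, res V E VL EL BV \<phi> (al \<delta>))) \<sigma>"
    proof (cases "bad \<delta>")
      case True
      have "\<not> consistent \<phi> V E \<delta>'"
      proof
        assume c: "consistent \<phi> V E \<delta>'"
        from True show False
          unfolding bad_def
        proof (elim disjE bexE conjE)
          fix x v1 v2 assume a: "x \<in> fvo \<phi>" "v1 \<in> VL" "v2 \<in> VL" "v1 \<noteq> v2" "\<delta> (DVO x v1)" "\<delta> (DVO x v2)"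
          from c \<open>x \<in> fvo \<phi>\<close> have ex: "\<exists>!v. v \<in> V \<and> \<delta>' (DVO x v)" by (simp add: consistent_def)
          have "\<delta>' (DVO x v1)" "\<delta>' (DVO x v2)" "v1 \<in> V" "v2 \<in> V" using a dVO[OF a(1)] VL by auto
          then show False using ex a(4) by blast
        next
          fix x v1 v2 assume a: "x \<in> feo \<phi>" "v1 \<in> EL" "v2 \<in> EL" "v1 \<noteq> v2" "\<delta> (DEO x v1)" "\<delta> (DEO x v2)"
          from c \<open>x \<in> feo \<phi>\<close> have ex: "\<exists>!v. v \<in> E \<and> \<delta>' (DEO x v)" by (simp add: consistent_def)
          have "\<delta>' (DEO x v1)" "\<delta>' (DEO x v2)" "v1 \<in> E" "v2 \<in> E" using a dEO[OF a(1)] EL by auto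
          then show False using ex a(4) by blast
        qed
      qed
      then show ?thesis using True by (simp add: Ffun_def)
    next
      case False
      have cV: "(\<exists>!v. v \<in> V \<and> \<delta>' (DVO x v)) = (if x \<in> lsV \<delta> then (\<forall>v\<in>V-VL. \<not> \<sigma> (DVO x v)) else (\<exists>!v. v \<in> V - VL \<and> \<sigma> (DVO x v)))"
        if x: "x \<in> fvo \<phi>" for x
      proof -
        have u: "V = VL \<union> (V - VL)" using VL by auto
        have "(\<exists>!v. v \<in> V \<and> \<delta>' (DVO x v)) = (if \<exists>v\<in>VL. \<delta>' (DVO x v) then \<forall>v\<in>V - VL. \<not> \<delta>' (DVO x v) else (\<exists>!v. v \<in> V - VL \<and> \<delta>' (DVO x v)))"
        proof (subst u, rule exu_split)
          show "\<forall>v1\<in>VL. \<forall>v2\<in>VL. \<delta>' (DVO x v1) \<and> \<delta>' (DVO x v2) \<longrightarrow> v1 = v2"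
          proof (intro ballI impI)
            fix v1 v2 assume a: "v1 \<in> VL" "v2 \<in> VL" "\<delta>' (DVO x v1) \<and> \<delta>' (DVO x v2)"
            then have "\<delta> (DVO x v1)" "\<delta> (DVO x v2)" using dVO[OF x] by auto
            then show "v1 = v2" using False x a(1,2) unfolding bad_def by blast
          qed
        qed auto
        also have "(\<exists>v\<in>VL. \<delta>' (DVO x v)) = (x \<in> lsV \<delta>)" using x dVO[OF x] by (auto simp: lsV_def)
        also have "(\<forall>v\<in>V - VL. \<not> \<delta>' (DVO x v)) = (\<forall>v\<in>V - VL. \<not> \<sigma> (DVO x v))" using dVO[OF x] by auto
        also have "(\<exists>!v. v \<in> V - VL \<and> \<delta>' (DVO x v)) = (\<exists>!v. v \<in> V - VL \<and> \<sigma> (DVO x v))"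
          using dVO[OF x] by (intro arg_cong[where f=Ex1] ext) auto
        finally show ?thesis .
      qed
      have cE: "(\<exists>!v. v \<in> E \<and> \<delta>' (DEO x v)) = (if x \<in> lsE \<delta> then (\<forall>v\<in>E-EL. \<not> \<sigma> (DEO x v)) else (\<exists>!v. v \<in> E - EL \<and> \<sigma> (DEO x v)))"
        if x: "x \<in> feo \<phi>" for x
      proof -
        have u: "E = EL \<union> (E - EL)" using EL by auto
        have "(\<exists>!v. v \<in> E \<and> \<delta>' (DEO x v)) = (if \<exists>v\<in>EL. \<delta>' (DEO x v) then \<forall>v\<in>E - EL. \<not> \<delta>' (DEO x v) else (\<exists>!v. v \<in> E - EL \<and> \<delta>' (DEO x v)))"
        proof (subst u, rule exu_split)
          show "\<forall>v1\<in>EL. \<forall>v2\<in>EL. \<delta>' (DEO x v1) \<and> \<delta>' (DEO x v2) \<longrightarrow> v1 = v2"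
          proof (intro ballI impI)
            fix v1 v2 assume a: "v1 \<in> EL" "v2 \<in> EL" "\<delta>' (DEO x v1) \<and> \<delta>' (DEO x v2)"
            then have "\<delta> (DEO x v1)" "\<delta> (DEO x v2)" using dEO[OF x] by auto
            then show "v1 = v2" using False x a(1,2) unfolding bad_def by blast
          qed
        qed auto
        also have "(\<exists>v\<in>EL. \<delta>' (DEO x v)) = (x \<in> lsE \<delta>)" using x dEO[OF x] by (auto simp: lsE_def)
        also have "(\<forall>v\<in>E - EL. \<not> \<delta>' (DEO x v)) = (\<forall>v\<in>E - EL. \<not> \<sigma> (DEO x v))" using dEO[OF x] by auto
        also have "(\<exists>!v. v \<in> E - EL \<and> \<delta>' (DEO x v)) = (\<exists>!v. v \<in> E - EL \<and> \<sigma> (DEO x v))"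
          using dEO[OF x] by (intro arg_cong[where f=Ex1] ext) auto
        finally show ?thesis .
      qed
      have cons: "consistent \<phi> V E \<delta>' = consR (lsV \<delta>) (lsE \<delta>) \<sigma>"
        unfolding consistent_def consR_def using cV cE by simp
      have good: "good VL EL BV (be \<sigma>)"
        unfolding good_def
      proof (intro conjI allI)
        fix x
        have "avo (be \<sigma>) x \<in> insert dV (V - VL)"
        proof (cases "\<exists>!v. v \<in> V - VL \<and> \<sigma> (DVO x v)")
          case True
          then have "(THE v. v \<in> V - VL \<and> \<sigma> (DVO x v)) \<in> V - VL" by (rule theI'[THEN conjunct1])
          then show ?thesis using True by (simp add: be_def)
        qed (simp add: be_def)
        then show "avo (be \<sigma>) x \<notin> VL" using dV VL by blast
        have "aeo (be \<sigma>) x \<in> insert {} (E - EL)"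
        proof (cases "\<exists>!v. v \<in> E - EL \<and> \<sigma> (DEO x v)")
          case True
          then have "(THE v. v \<in> E - EL \<and> \<sigma> (DEO x v)) \<in> E - EL" by (rule theI'[THEN conjunct1])
          then show ?thesis using True by (simp add: be_def)
        qed (simp add: be_def)
        moreover have "{} \<notin> EL" using Enz EL by auto
        ultimately have dj: "aeo (be \<sigma>) x = {} \<or> aeo (be \<sigma>) x \<in> E - EL" by simp
        show "aeo (be \<sigma>) x \<notin> EL" using dj \<open>{} \<notin> EL\<close> by (metis DiffD2)
        show "aeo (be \<sigma>) x \<inter> VL \<subseteq> BV"
        proof (rule subsetI)
          fix v assume v: "v \<in> aeo (be \<sigma>) x \<inter> VL"
          then have a: "aeo (be \<sigma>) x \<in> E - EL" using dj by (metis IntD1 empty_iff)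
          show "v \<in> BV" unfolding BV using v a by blast
        qed
      qed
      have sat: "sat V E (decode V E \<delta>') \<phi> = sat V E (glue VL EL (al \<delta>) (be \<sigma>)) \<phi>" if c: "consistent \<phi> V E \<delta>'"
      proof (rule sat_agree)
        show "\<forall>x\<in>fvo \<phi>. avo (decode V E \<delta>') x = avo (glue VL EL (al \<delta>) (be \<sigma>)) x"
        proof
          fix x assume x: "x \<in> fvo \<phi>"
          from c x have ex: "\<exists>!v. v \<in> V \<and> \<delta>' (DVO x v)" by (simp add: consistent_def)
          then obtain v0 where v0': "v0 \<in> V \<and> \<delta>' (DVO x v0)" and uu: "\<forall>y. y \<in> V \<and> \<delta>' (DVO x y) \<longrightarrow> y = v0"
            by (rule ex1E)
          have v0: "v0 \<in> V" "\<delta>' (DVO x v0)" using v0' by simp_all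
          have u: "v = v0" if "v \<in> V" "\<delta>' (DVO x v)" for v using uu that by meson
          have d: "avo (decode V E \<delta>') x = v0"
          proof -
            have "(THE v. v \<in> V \<and> \<delta>' (DVO x v)) = v0"
              by (rule the_equality) (use v0 in simp, meson u)
            then show ?thesis by (simp add: decode_def)
          qed
          show "avo (decode V E \<delta>') x = avo (glue VL EL (al \<delta>) (be \<sigma>)) x"
          proof (cases "v0 \<in> VL")
            case True
            have uL: "v = v0" if "v \<in> VL" "\<delta> (DVO x v)" for v
            proof (rule u)
              show "v \<in> V" using that VL by auto
              show "\<delta>' (DVO x v)" using that dVO[OF x, of v] by simp
            qed
            have w0: "v0 \<in> VL \<and> \<delta> (DVO x v0)" using True v0 dVO[OF x] by simp
            have "\<exists>!v. v \<in> VL \<and> \<delta> (DVO x v)"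
              by (rule ex1I[of _ v0]) (rule w0, meson uL)
            moreover have "(THE v. v \<in> VL \<and> \<delta> (DVO x v)) = v0"
              by (rule the_equality) (rule w0, meson uL)
            ultimately show ?thesis using True d by (simp add: glue_def al_def)
          next
            case nv: False
            have "\<not> (\<exists>!v. v \<in> VL \<and> \<delta> (DVO x v))"
            proof
              assume "\<exists>!v. v \<in> VL \<and> \<delta> (DVO x v)"
              then obtain w where w: "w \<in> VL" "\<delta> (DVO x w)" by blast
              have "w = v0"
              proof (rule u)
                show "w \<in> V" using w VL by auto
                show "\<delta>' (DVO x w)" using w dVO[OF x, of w] by simp
              qed
              then show False using nv w by simp
            qed
            then have a1: "avo (al \<delta>) x = dV" by (simp add: al_def)
            have uR: "v = v0" if "v \<in> V - VL" "\<sigma> (DVO x v)" for v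
            proof (rule u)
              show "v \<in> V" using that by auto
              show "\<delta>' (DVO x v)" using that dVO[OF x, of v] by simp
            qed
            have w0: "v0 \<in> V - VL \<and> \<sigma> (DVO x v0)" using nv v0 dVO[OF x] by simp
            have a2: "\<exists>!v. v \<in> V - VL \<and> \<sigma> (DVO x v)"
              by (rule ex1I[of _ v0]) (rule w0, meson uR)
            have a3: "(THE v. v \<in> V - VL \<and> \<sigma> (DVO x v)) = v0"
              by (rule the_equality) (rule w0, meson uR)
            have "dV \<notin> VL" using dV VL by auto
            then show ?thesis using d a1 a2 a3 by (simp add: glue_def be_def)
          qed
        qed
        show "\<forall>x\<in>feo \<phi>. aeo (decode V E \<delta>') x = aeo (glue VL EL (al \<delta>) (be \<sigma>)) x"
        proof
          fix x assume x: "x \<in> feo \<phi>"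
          from c x have ex: "\<exists>!v. v \<in> E \<and> \<delta>' (DEO x v)" by (simp add: consistent_def)
          then obtain v0 where v0': "v0 \<in> E \<and> \<delta>' (DEO x v0)" and uu: "\<forall>y. y \<in> E \<and> \<delta>' (DEO x y) \<longrightarrow> y = v0"
            by (rule ex1E)
          have v0: "v0 \<in> E" "\<delta>' (DEO x v0)" using v0' by simp_all
          have u: "v = v0" if "v \<in> E" "\<delta>' (DEO x v)" for v using uu that by meson
          have d: "aeo (decode V E \<delta>') x = v0"
          proof -
            have "(THE v. v \<in> E \<and> \<delta>' (DEO x v)) = v0"
              by (rule the_equality) (use v0 in simp, meson u)
            then show ?thesis by (simp add: decode_def)
          qed
          show "aeo (decode V E \<delta>') x = aeo (glue VL EL (al \<delta>) (be \<sigma>)) x"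
          proof (cases "v0 \<in> EL")
            case True
            have uL: "v = v0" if "v \<in> EL" "\<delta> (DEO x v)" for v
            proof (rule u)
              show "v \<in> E" using that EL by auto
              show "\<delta>' (DEO x v)" using that dEO[OF x, of v] by simp
            qed
            have w0: "v0 \<in> EL \<and> \<delta> (DEO x v0)" using True v0 dEO[OF x] by simp
            have "\<exists>!v. v \<in> EL \<and> \<delta> (DEO x v)"
              by (rule ex1I[of _ v0]) (rule w0, meson uL)
            moreover have "(THE v. v \<in> EL \<and> \<delta> (DEO x v)) = v0"
              by (rule the_equality) (rule w0, meson uL)
            ultimately show ?thesis using True d by (simp add: glue_def al_def)
          next
            case nv: False
            have "\<not> (\<exists>!v. v \<in> EL \<and> \<delta> (DEO x v))"
            proof
              assume "\<exists>!v. v \<in> EL \<and> \<delta> (DEO x v)"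
              then obtain w where w: "w \<in> EL" "\<delta> (DEO x w)" by blast
              have "w = v0"
              proof (rule u)
                show "w \<in> E" using w EL by auto
                show "\<delta>' (DEO x w)" using w dEO[OF x, of w] by simp
              qed
              then show False using nv w by simp
            qed
            then have a1: "aeo (al \<delta>) x = {}" by (simp add: al_def)
            have uR: "v = v0" if "v \<in> E - EL" "\<sigma> (DEO x v)" for v
            proof (rule u)
              show "v \<in> E" using that by auto
              show "\<delta>' (DEO x v)" using that dEO[OF x, of v] by simp
            qed
            have w0: "v0 \<in> E - EL \<and> \<sigma> (DEO x v0)" using nv v0 dEO[OF x] by simp
            have a2: "\<exists>!v. v \<in> E - EL \<and> \<sigma> (DEO x v)"
              by (rule ex1I[of _ v0]) (rule w0, meson uR)
            have a3: "(THE v. v \<in> E - EL \<and> \<sigma> (DEO x v)) = v0"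
              by (rule the_equality) (rule w0, meson uR)
            have "{} \<notin> EL" using Enz EL by auto
            then show ?thesis using d a1 a2 a3 by (simp add: glue_def be_def)
          qed
        qed
        have e1: "avs (decode V E \<delta>') X = {v\<in>V. \<delta>' (DVS X v)}" "aes (decode V E \<delta>') X = {v\<in>E. \<delta>' (DES X v)}"
          "avs (glue VL EL (al \<delta>) (be \<sigma>)) X = {v\<in>VL. \<delta> (DVS X v)} \<union> {v\<in>V - VL. \<sigma> (DVS X v)}"
          "aes (glue VL EL (al \<delta>) (be \<sigma>)) X = {v\<in>EL. \<delta> (DES X v)} \<union> {v\<in>E - EL. \<sigma> (DES X v)}" for X
          by (simp_all add: decode_def glue_def al_def be_def) blast+
        show "\<forall>X\<in>fvs \<phi>. avs (decode V E \<delta>') X = avs (glue VL EL (al \<delta>) (be \<sigma>)) X"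
          unfolding e1 using dVS VL by auto
        show "\<forall>X\<in>fes \<phi>. aes (decode V E \<delta>') X = aes (glue VL EL (al \<delta>) (be \<sigma>)) X"
          unfolding e1 using dES EL by auto
      qed
      show ?thesis using False cons sat good
        by (auto simp: Ffun_def Psi_def res_def)
    qed
  qed
  have rb: "finite (range (res V E VL EL BV \<phi>)) \<and> card (range (res V E VL EL BV \<phi>)) \<le> Tb (card BV) (msize \<phi>)"
    using A1 gV VL by (intro res_bound) (auto simp: BV intro: finite_subset)
  let ?X = "Pow (fvo \<phi>) \<times> Pow (feo \<phi>) \<times> range (res V E VL EL BV \<phi>)"
  have sub: "range (\<lambda>\<delta> \<sigma>. Ffun \<phi> V E (ovr PL \<delta> \<sigma>)) \<subseteq> insert (\<lambda>\<sigma>. False) (Psi ` ?X)"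
  proof
    fix h assume "h \<in> range (\<lambda>\<delta> \<sigma>. Ffun \<phi> V E (ovr PL \<delta> \<sigma>))"
    then obtain \<delta> where h: "h = (\<lambda>\<sigma>. Ffun \<phi> V E (ovr PL \<delta> \<sigma>))" by auto
    show "h \<in> insert (\<lambda>\<sigma>. False) (Psi ` ?X)"
    proof (cases "bad \<delta>")
      case True then show ?thesis unfolding h key by simp
    next
      case False
      have "(lsV \<delta>, lsE \<delta>, res V E VL EL BV \<phi> (al \<delta>)) \<in> ?X" by (auto simp: lsV_def lsE_def)
      then show ?thesis unfolding h key using False by simp
    qed
  qed
  have fx: "finite ?X" using fv_card[of \<phi>] rb by auto
  have "card ?X = 2 ^ card (fvo \<phi>) * (2 ^ card (feo \<phi>) * card (range (res V E VL EL BV \<phi>)))"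
    using fv_card[of \<phi>] rb by (simp add: card_cartesian_product card_Pow)
  also have "\<dots> \<le> 2 ^ card (fvo \<phi>) * (2 ^ card (feo \<phi>) * Tb (card BV) (msize \<phi>))"
    using rb by simp
  finally have cx: "card ?X \<le> 2 ^ (card (fvo \<phi>) + card (feo \<phi>)) * Tb (card BV) (msize \<phi>)"
    by (simp add: power_add)
  have fin2: "finite (insert (\<lambda>\<sigma>. False) (Psi ` ?X))" using fx by simp
  have "card (insert (\<lambda>\<sigma>. False) (Psi ` ?X)) \<le> 1 + card (Psi ` ?X)"
    by (simp add: card_insert_if fx)
  also have "\<dots> \<le> 1 + card ?X" using card_image_le[OF fx] by simp
  finally have "card (insert (\<lambda>\<sigma>. False) (Psi ` ?X)) \<le> 1 + 2 ^ (card (fvo \<phi>) + card (feo \<phi>)) * Tb (card BV) (msize \<phi>)"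
    using cx by linarith
  then show ?thesis using sub fin2 by (meson card_mono finite_subset le_trans)
qed



fun build :: "dvar list \<Rightarrow> ((dvar \<Rightarrow> bool) \<Rightarrow> bool) \<Rightarrow> bdd" where
  "build [] h = Leaf (h (\<lambda>_. False))"
| "build (d # ds) h = Node d (build ds (\<lambda>\<sigma>. h (\<sigma>(d := False)))) (build ds (\<lambda>\<sigma>. h (\<sigma>(d := True))))"

lemma build_eval:
  "(\<forall>\<sigma> \<sigma>'. (\<forall>d\<in>set ds. \<sigma> d = \<sigma>' d) \<longrightarrow> h \<sigma> = h \<sigma>') \<Longrightarrow> beval (build ds h) \<sigma> = h \<sigma>"
proof (induction ds arbitrary: h \<sigma>)
  case Nil
  then show ?case by simp
next
  case (Cons d ds)
  have h0: "beval (build ds (\<lambda>\<sigma>. h (\<sigma>(d := False)))) \<sigma> = h (\<sigma>(d := False))"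
    by (rule Cons.IH) (use Cons.prems in auto)
  have h1: "beval (build ds (\<lambda>\<sigma>. h (\<sigma>(d := True)))) \<sigma> = h (\<sigma>(d := True))"
    by (rule Cons.IH) (use Cons.prems in auto)
  show ?case
  proof (cases "\<sigma> d")
    case True
    then have "\<sigma>(d := True) = \<sigma>" by (intro fun_upd_idem) simp
    then show ?thesis using True h1 by simp
  next
    case False
    then have "\<sigma>(d := False) = \<sigma>" by (intro fun_upd_idem) simp
    then show ?thesis using False h0 by simp
  qed
qed

lemma build_vars: "bvars (build ds h) \<subseteq> set ds"
  by (induction ds arbitrary: h) auto

fun lrel :: "dvar list \<Rightarrow> dvar rel" where
  "lrel [] = {}"
| "lrel (d # ds) = {d} \<times> set ds \<union> lrel ds"

lemma bordered_mono: "bordered r t \<Longrightarrow> r \<subseteq> r' \<Longrightarrow> bordered r' t"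
  by (induction t) auto

lemma lrel_sub: "lrel ds \<subseteq> set ds \<times> set ds"
  by (induction ds) auto

lemma build_bordered: "bordered (lrel ds) (build ds h)"
proof (induction ds arbitrary: h)
  case (Cons d ds)
  have "lrel ds \<subseteq> lrel (d # ds)" by auto
  then show ?case using Cons build_vars[of ds] by (auto intro: bordered_mono)
qed simp

lemma lrel_order: "distinct ds \<Longrightarrow> strict_linear_order_on (set ds) (lrel ds)"
proof (induction ds)
  case Nil
  then show ?case by (simp add: strict_linear_order_on_def trans_def irrefl_on_def total_on_def)
next
  case (Cons d ds)
  then have IH: "trans (lrel ds)" "irrefl (lrel ds)" "total_on (set ds) (lrel ds)" and dn: "d \<notin> set ds"
    by (auto simp: strict_linear_order_on_def)
  have s: "lrel ds \<subseteq> set ds \<times> set ds" by (rule lrel_sub)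
  have "trans (lrel (d # ds))"
    unfolding trans_def
  proof (intro allI impI)
    fix a b c assume ab: "(a, b) \<in> lrel (d # ds)" and bc: "(b, c) \<in> lrel (d # ds)"
    show "(a, c) \<in> lrel (d # ds)"
    proof (cases "(a, b) \<in> lrel ds")
      case True
      then have "b \<in> set ds" using s by auto
      then have "b \<noteq> d" using dn by auto
      then have "(b, c) \<in> lrel ds" using bc by auto
      then show ?thesis using True IH(1) by (auto dest: transD)
    next
      case False
      then have "a = d" "b \<in> set ds" using ab by auto
      then have "b \<noteq> d" using dn by auto
      then have "(b, c) \<in> lrel ds" using bc by auto
      then have "c \<in> set ds" using s by auto
      then show ?thesis using \<open>a = d\<close> by simp
    qed
  qed
  moreover have "irrefl (lrel (d # ds))"
    using IH(2) dn by (auto simp: irrefl_on_def)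
  moreover have "total_on (set (d # ds)) (lrel (d # ds))"
    using IH(3) by (auto simp: total_on_def)
  ultimately show ?case by (simp add: strict_linear_order_on_def)
qed

definition Res :: "((dvar \<Rightarrow> bool) \<Rightarrow> bool) \<Rightarrow> dvar list \<Rightarrow> nat \<Rightarrow> ((dvar \<Rightarrow> bool) \<Rightarrow> bool) set" where
  "Res F ds i = range (\<lambda>\<delta> \<sigma>. F (ovr (set (take i ds)) \<delta> \<sigma>))"

lemma Res_step:
  assumes "distinct ds" "i < length ds" "h \<in> Res F ds i"
  shows "(\<lambda>\<sigma>. h (\<sigma>(ds ! i := b))) \<in> Res F ds (Suc i)"
proof -
  obtain \<delta> where h: "h = (\<lambda>\<sigma>. F (ovr (set (take i ds)) \<delta> \<sigma>))" using assms(3) by (auto simp: Res_def)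
  have nd: "ds ! i \<notin> set (take i ds)"
  proof -
    have "distinct (take i ds @ ds ! i # drop (Suc i) ds)"
      using assms(1,2) id_take_nth_drop by metis
    then show ?thesis by simp
  qed
  have st: "set (take (Suc i) ds) = insert (ds ! i) (set (take i ds))"
    using assms(2) by (simp add: take_Suc_conv_app_nth)
  have "ovr (set (take i ds)) \<delta> (\<sigma>(ds ! i := b)) = ovr (set (take (Suc i) ds)) (\<delta>(ds ! i := b)) \<sigma>" for \<sigma>
    unfolding st ovr_def using nd by (auto simp: fun_eq_iff)
  then show ?thesis unfolding h Res_def by auto
qed

lemma build_nodes:
  assumes "distinct ds"
  shows "i \<le> length ds \<Longrightarrow> drop i ds = ds' \<Longrightarrow> h \<in> Res F ds i \<Longrightarrow>
    bnodes (build ds' h) \<subseteq> (\<Union>j\<in>{i..length ds}. (\<lambda>h. build (drop j ds) h) ` Res F ds j)"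
proof (induction ds' arbitrary: i h)
  case Nil
  then have "i = length ds" by auto
  then show ?case using Nil by (auto intro!: bexI[of _ i] image_eqI[of _ _ h])
next
  case (Cons d ds')
  then have il: "i < length ds" by (metis drop_all list.distinct(1) not_le)
  have dd: "ds ! i = d" "drop (Suc i) ds = ds'" using Cons.prems(2) il
    by (metis Cons_nth_drop_Suc list.inject)+
  have r0: "(\<lambda>\<sigma>. h (\<sigma>(d := False))) \<in> Res F ds (Suc i)" and r1: "(\<lambda>\<sigma>. h (\<sigma>(d := True))) \<in> Res F ds (Suc i)"
    using Res_step[OF assms il Cons.prems(3), of False] Res_step[OF assms il Cons.prems(3), of True] dd(1)
    by (simp_all add: fun_upd_def)
  have s0: "bnodes (build ds' (\<lambda>\<sigma>. h (\<sigma>(d := False)))) \<subseteq> (\<Union>j\<in>{Suc i..length ds}. (\<lambda>h. build (drop j ds) h) ` Res F ds j)"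
    using Cons.IH[of "Suc i", OF _ dd(2) r0] il by (simp add: fun_upd_def)
  have s1: "bnodes (build ds' (\<lambda>\<sigma>. h (\<sigma>(d := True)))) \<subseteq> (\<Union>j\<in>{Suc i..length ds}. (\<lambda>h. build (drop j ds) h) ` Res F ds j)"
    using Cons.IH[of "Suc i", OF _ dd(2) r1] il by (simp add: fun_upd_def)
  let ?U = "\<lambda>k. (\<Union>j\<in>{k..length ds}. (\<lambda>h. build (drop j ds) h) ` Res F ds j)"
  have "build (d # ds') h \<in> (\<lambda>h. build (drop i ds) h) ` Res F ds i"
    using Cons.prems(2,3) by auto
  then have mem: "build (d # ds') h \<in> ?U i" using il by auto
  have sub: "?U (Suc i) \<subseteq> ?U i" by (intro UN_mono) auto
  have bn: "bnodes (build (d # ds') h) = insert (build (d # ds') h)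
     (bnodes (build ds' (\<lambda>\<sigma>. h (\<sigma>(d := False)))) \<union> bnodes (build ds' (\<lambda>\<sigma>. h (\<sigma>(d := True)))))"
    by simp
  have "bnodes (build ds' (\<lambda>\<sigma>. h (\<sigma>(d := False)))) \<union> bnodes (build ds' (\<lambda>\<sigma>. h (\<sigma>(d := True)))) \<subseteq> ?U i"
    using s0 s1 sub by (meson Un_least order_trans)
  then show ?case unfolding bn insert_subset using mem by (intro conjI)
qed

lemma build_card:
  assumes "distinct ds" "\<And>j. j \<le> length ds \<Longrightarrow> finite (Res F ds j) \<and> card (Res F ds j) \<le> R"
    and "F \<in> Res F ds 0"
  shows "card (bnodes (build ds F)) \<le> (length ds + 1) * R"
proof -
  have sub: "bnodes (build ds F) \<subseteq> (\<Union>j\<in>{0..length ds}. (\<lambda>h. build (drop j ds) h) ` Res F ds j)"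
    using build_nodes[OF assms(1), of 0 ds F] assms(3) by simp
  have fin: "finite (\<Union>j\<in>{0..length ds}. (\<lambda>h. build (drop j ds) h) ` Res F ds j)"
    using assms(2) by auto
  have "card (bnodes (build ds F)) \<le> card (\<Union>j\<in>{0..length ds}. (\<lambda>h. build (drop j ds) h) ` Res F ds j)"
    by (rule card_mono[OF fin sub])
  also have "\<dots> \<le> (\<Sum>j\<in>{0..length ds}. card ((\<lambda>h. build (drop j ds) h) ` Res F ds j))"
    by (rule card_UN_le) simp
  also have "\<dots> \<le> (\<Sum>j\<in>{0..length ds}. R)"
    by (intro sum_mono) (meson assms(2) atLeastAtMost_iff card_image_le le_trans)
  also have "\<dots> = (length ds + 1) * R" by simp
  finally show ?thesis .
qed



definition fvI :: "nat set list \<Rightarrow> nat \<Rightarrow> nat" where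
  "fvI B v = (LEAST i. i < length B \<and> v \<in> B ! i)"
definition feI :: "nat set list \<Rightarrow> nat set \<Rightarrow> nat" where
  "feI B e = (LEAST i. i < length B \<and> e \<subseteq> B ! i)"
definition okV :: "nat set list \<Rightarrow> nat \<Rightarrow> nat \<times> nat \<times> nat \<times> nat" where
  "okV B v = (fvI B v, 0, v, 0)"
definition okE :: "nat set list \<Rightarrow> nat set \<Rightarrow> nat \<times> nat \<times> nat \<times> nat" where
  "okE B e = (feI B e, 1, Min e, Max e)"

fun obk :: "nat set list \<Rightarrow> dvar \<Rightarrow> nat \<times> nat \<times> nat \<times> nat" where
  "obk B (DVO x v) = okV B v"
| "obk B (DVS x v) = okV B v"
| "obk B (DEO x e) = okE B e"
| "obk B (DES x e) = okE B e"

fun dsub :: "dvar \<Rightarrow> nat \<times> nat" where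
  "dsub (DVO x v) = (0, x)"
| "dsub (DVS x v) = (1, x)"
| "dsub (DEO x e) = (0, x)"
| "dsub (DES x e) = (1, x)"

definition dkey :: "nat set list \<Rightarrow> dvar \<Rightarrow> (nat \<times> nat \<times> nat \<times> nat) \<times> nat \<times> nat" where
  "dkey B d = (obk B d, dsub d)"

lemma fvI:
  assumes "path_decomp V E B" "v \<in> V"
  shows "fvI B v < length B" "v \<in> B ! fvI B v" "\<And>i. i < length B \<Longrightarrow> v \<in> B ! i \<Longrightarrow> fvI B v \<le> i"
proof -
  have "\<exists>i. i < length B \<and> v \<in> B ! i"
    using assms unfolding path_decomp_def by (metis in_set_conv_nth)
  then have "fvI B v < length B \<and> v \<in> B ! fvI B v" unfolding fvI_def by (rule LeastI_ex)
  then show "fvI B v < length B" "v \<in> B ! fvI B v" by auto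
  show "\<And>i. i < length B \<Longrightarrow> v \<in> B ! i \<Longrightarrow> fvI B v \<le> i" unfolding fvI_def by (simp add: Least_le)
qed

lemma feI:
  assumes "path_decomp V E B" "e \<in> E"
  shows "feI B e < length B" "e \<subseteq> B ! feI B e" "\<And>i. i < length B \<Longrightarrow> e \<subseteq> B ! i \<Longrightarrow> feI B e \<le> i"
proof -
  have "\<exists>i. i < length B \<and> e \<subseteq> B ! i"
    using assms unfolding path_decomp_def by (metis in_set_conv_nth)
  then have "feI B e < length B \<and> e \<subseteq> B ! feI B e" unfolding feI_def by (rule LeastI_ex)
  then show "feI B e < length B" "e \<subseteq> B ! feI B e" by auto
  show "\<And>i. i < length B \<Longrightarrow> e \<subseteq> B ! i \<Longrightarrow> feI B e \<le> i" unfolding feI_def by (simp add: Least_le)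
qed

lemma edge_minmax: "e = {a, b} \<Longrightarrow> e = {Min e, Max e}"
  by (auto simp: min_def max_def)

lemma okE_inj:
  assumes "graph V E" "e \<in> E" "e' \<in> E" "okE B e = okE B e'"
  shows "e = e'"
proof -
  obtain a b where "e = {a, b}" using assms(1,2) unfolding graph_def by blast
  then have 1: "e = {Min e, Max e}" by (rule edge_minmax)
  obtain a' b' where "e' = {a', b'}" using assms(1,3) unfolding graph_def by blast
  then have 2: "e' = {Min e', Max e'}" by (rule edge_minmax)
  from assms(4) have "Min e = Min e'" "Max e = Max e'" by (auto simp: okE_def)
  with 1 2 show ?thesis by metis
qed

lemma graph_fin: "graph V E \<Longrightarrow> finite V \<and> finite E \<and> {} \<notin> E \<and> (\<forall>e\<in>E. e \<subseteq> V)"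
proof -
  assume g: "graph V E"
  then have "E \<subseteq> Pow V" unfolding graph_def by auto
  then show ?thesis using g unfolding graph_def by (auto intro: finite_subset)
qed

lemma ovr_split: "ovr (A \<union> Q) \<delta> \<sigma> = ovr A \<delta> (ovr Q (\<lambda>d. d \<in> {d\<in>Q. \<delta> d}) \<sigma>)"
  by (auto simp: ovr_def fun_eq_iff)

lemma obk_V_sub:
  assumes "graph V E" "v0 \<in> V"
  shows "{d \<in> dvars \<phi> V E. obk B d = okV B v0} \<subseteq> (\<lambda>x. DVO x v0) ` fvo \<phi> \<union> (\<lambda>X. DVS X v0) ` fvs \<phi>"
proof
  fix d assume d: "d \<in> {d \<in> dvars \<phi> V E. obk B d = okV B v0}"
  then show "d \<in> (\<lambda>x. DVO x v0) ` fvo \<phi> \<union> (\<lambda>X. DVS X v0) ` fvs \<phi>"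
    by (cases d) (auto simp: dvars_def okV_def okE_def)
qed

lemma obk_E_sub:
  assumes "graph V E" "e0 \<in> E"
  shows "{d \<in> dvars \<phi> V E. obk B d = okE B e0} \<subseteq> (\<lambda>x. DEO x e0) ` feo \<phi> \<union> (\<lambda>X. DES X e0) ` fes \<phi>"
proof
  fix d assume d: "d \<in> {d \<in> dvars \<phi> V E. obk B d = okE B e0}"
  show "d \<in> (\<lambda>x. DEO x e0) ` feo \<phi> \<union> (\<lambda>X. DES X e0) ` fes \<phi>"
  proof (cases d)
    case (DEO x e)
    then have "e = e0" using d okE_inj[OF assms(1) _ assms(2), of e B] by (auto simp: dvars_def)
    then show ?thesis using d DEO by (auto simp: dvars_def)
  next
    case (DES x e)
    then have "e = e0" using d okE_inj[OF assms(1) _ assms(2), of e B] by (auto simp: dvars_def)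
    then show ?thesis using d DES by (auto simp: dvars_def)
  qed (use d in \<open>auto simp: dvars_def okV_def okE_def\<close>)
qed

lemma card_img_un: "finite A \<Longrightarrow> finite B \<Longrightarrow> card (f ` A \<union> g ` B) \<le> card A + card B"
  by (meson card_Un_le card_image_le add_mono le_trans)

lemma Q_card:
  assumes "graph V E" "d0 \<in> dvars \<phi> V E"
  shows "finite {d \<in> dvars \<phi> V E. obk B d = obk B d0} \<and> card {d \<in> dvars \<phi> V E. obk B d = obk B d0} \<le> msize \<phi>"
proof -
  have fc: "finite (fvo \<phi>)" "finite (feo \<phi>)" "finite (fvs \<phi>)" "finite (fes \<phi>)"
    and sc: "card (fvo \<phi>) + card (feo \<phi>) + card (fvs \<phi>) + card (fes \<phi>) \<le> msize \<phi>"
    using fv_card[of \<phi>] by auto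
  show ?thesis
  proof (cases d0)
    case (DVO x v0)
    then have v0: "v0 \<in> V" using assms(2) by (auto simp: dvars_def)
    let ?S = "(\<lambda>x. DVO x v0) ` fvo \<phi> \<union> (\<lambda>X. DVS X v0) ` fvs \<phi>"
    have "{d \<in> dvars \<phi> V E. obk B d = obk B d0} \<subseteq> ?S" using obk_V_sub[OF assms(1) v0] DVO by simp
    moreover have "finite ?S" using fc by simp
    moreover have "card ?S \<le> msize \<phi>" using card_img_un[OF fc(1) fc(3), of "\<lambda>x. DVO x v0" "\<lambda>X. DVS X v0"] sc by linarith
    ultimately show ?thesis by (meson card_mono finite_subset le_trans)
  next
    case (DVS x v0)
    then have v0: "v0 \<in> V" using assms(2) by (auto simp: dvars_def)
    let ?S = "(\<lambda>x. DVO x v0) ` fvo \<phi> \<union> (\<lambda>X. DVS X v0) ` fvs \<phi>"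
    have "{d \<in> dvars \<phi> V E. obk B d = obk B d0} \<subseteq> ?S" using obk_V_sub[OF assms(1) v0] DVS by simp
    moreover have "finite ?S" using fc by simp
    moreover have "card ?S \<le> msize \<phi>" using card_img_un[OF fc(1) fc(3), of "\<lambda>x. DVO x v0" "\<lambda>X. DVS X v0"] sc by linarith
    ultimately show ?thesis by (meson card_mono finite_subset le_trans)
  next
    case (DEO x e0)
    then have e0: "e0 \<in> E" using assms(2) by (auto simp: dvars_def)
    let ?S = "(\<lambda>x. DEO x e0) ` feo \<phi> \<union> (\<lambda>X. DES X e0) ` fes \<phi>"
    have "{d \<in> dvars \<phi> V E. obk B d = obk B d0} \<subseteq> ?S" using obk_E_sub[OF assms(1) e0] DEO by simp
    moreover have "finite ?S" using fc by simp
    moreover have "card ?S \<le> msize \<phi>" using card_img_un[OF fc(2) fc(4), of "\<lambda>x. DEO x e0" "\<lambda>X. DES X e0"] sc by linarith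
    ultimately show ?thesis by (meson card_mono finite_subset le_trans)
  next
    case (DES x e0)
    then have e0: "e0 \<in> E" using assms(2) by (auto simp: dvars_def)
    let ?S = "(\<lambda>x. DEO x e0) ` feo \<phi> \<union> (\<lambda>X. DES X e0) ` fes \<phi>"
    have "{d \<in> dvars \<phi> V E. obk B d = obk B d0} \<subseteq> ?S" using obk_E_sub[OF assms(1) e0] DES by simp
    moreover have "finite ?S" using fc by simp
    moreover have "card ?S \<le> msize \<phi>" using card_img_un[OF fc(2) fc(4), of "\<lambda>x. DEO x e0" "\<lambda>X. DES X e0"] sc by linarith
    ultimately show ?thesis by (meson card_mono finite_subset le_trans)
  qed
qed

lemma level_bound:
  assumes g: "graph V E" and pd: "path_decomp V E B"
    and dsd: "distinct ds" and dsD: "set ds = dvars \<phi> V E" and srt: "sorted (map (dkey B) ds)"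
    and j: "j < length ds"
  shows "finite (Res (Ffun \<phi> V E) ds j) \<and>
     card (Res (Ffun \<phi> V E) ds j) \<le> (1 + 2 ^ msize \<phi> * Tb (pd_width B + 1) (msize \<phi>)) * 2 ^ msize \<phi>"
proof -
  let ?D = "dvars \<phi> V E"
  let ?F = "Ffun \<phi> V E"
  have gf: "finite V" "finite E" "{} \<notin> E" "\<And>e. e \<in> E \<Longrightarrow> e \<subseteq> V" using graph_fin[OF g] by auto
  define d0 where "d0 = ds ! j"
  define k0 where "k0 = obk B d0"
  define c where "c = fst k0"
  define VL where "VL = {v \<in> V. okV B v < k0}"
  define EL where "EL = {e \<in> E. okE B e < k0}"
  define BV where "BV = VL \<inter> \<Union>(E - EL)"
  define PL where "PL = {DVO x v | x v. x \<in> fvo \<phi> \<and> v \<in> VL} \<union> {DEO x e | x e. x \<in> feo \<phi> \<and> e \<in> EL}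
       \<union> {DVS X v | X v. X \<in> fvs \<phi> \<and> v \<in> VL} \<union> {DES X e | X e. X \<in> fes \<phi> \<and> e \<in> EL}"
  define Q where "Q = set (take j ds) - PL"
  have d0D: "d0 \<in> ?D" using j dsD unfolding d0_def by (metis nth_mem)
  have okle: "obk B (ds ! i) \<le> obk B (ds ! i')" if "i \<le> i'" "i' < length ds" for i i'
  proof -
    have "(map (dkey B) ds) ! i \<le> (map (dkey B) ds) ! i'"
      using sorted_nth_mono[OF srt, of i i'] that by simp
    then have "dkey B (ds ! i) \<le> dkey B (ds ! i')" using that by simp
    then show ?thesis unfolding dkey_def less_eq_prod_simp by (metis less_imp_le)
  qed
  have PLc: "d \<in> PL \<longleftrightarrow> obk B d < k0" if "d \<in> ?D" for d
    using that by (cases d) (auto simp: PL_def VL_def EL_def dvars_def)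
  have PLD: "PL \<subseteq> ?D" by (auto simp: PL_def VL_def EL_def dvars_def)
  have PL_sub: "PL \<subseteq> set (take j ds)"
  proof
    fix d assume d: "d \<in> PL"
    then have "d \<in> set ds" using PLD dsD by auto
    then obtain i where i: "i < length ds" "ds ! i = d" by (metis in_set_conv_nth)
    have "i < j"
    proof (rule ccontr)
      assume "\<not> i < j"
      then have "k0 \<le> obk B d" using okle[of j i] i unfolding k0_def d0_def by simp
      moreover have "obk B d < k0" using PLc[of d] d PLD by auto
      ultimately show False by simp
    qed
    then show "d \<in> set (take j ds)" using i by (metis in_set_conv_nth length_take min_less_iff_conj nth_take)
  qed
  have Q_sub: "Q \<subseteq> {d \<in> ?D. obk B d = obk B d0}"
  proof
    fix d assume d: "d \<in> Q"
    then have dt: "d \<in> set (take j ds)" "d \<notin> PL" by (auto simp: Q_def)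
    then obtain i where i: "i < j" "ds ! i = d" using j
      by (metis in_set_conv_nth length_take min_less_iff_conj nth_take)
    have dD: "d \<in> ?D" using i j dsD by (metis nth_mem order.strict_trans)
    have "obk B d \<le> k0" using okle[of i j] i j unfolding k0_def d0_def by simp
    moreover have "\<not> obk B d < k0" using PLc[OF dD] dt by simp
    ultimately show "d \<in> {d \<in> ?D. obk B d = obk B d0}" using dD unfolding k0_def by simp
  qed
  have split: "set (take j ds) = PL \<union> Q" using PL_sub unfolding Q_def by auto
  have Qfc: "finite Q \<and> card Q \<le> msize \<phi>"
    using Q_card[OF g d0D, of B] Q_sub by (meson card_mono finite_subset le_trans)
  have cB: "c < length B"
  proof (cases d0)
    case (DVO x v) then show ?thesis using d0D fvI(1)[OF pd] by (auto simp: c_def k0_def okV_def dvars_def)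
  next
    case (DVS x v) then show ?thesis using d0D fvI(1)[OF pd] by (auto simp: c_def k0_def okV_def dvars_def)
  next
    case (DEO x v) then show ?thesis using d0D feI(1)[OF pd] by (auto simp: c_def k0_def okE_def dvars_def)
  next
    case (DES x v) then show ?thesis using d0D feI(1)[OF pd] by (auto simp: c_def k0_def okE_def dvars_def)
  qed
  have A1: "\<forall>e\<in>EL. e \<subseteq> VL"
  proof (intro ballI subsetI)
    fix e u assume e: "e \<in> EL" and u: "u \<in> e"
    have eE: "e \<in> E" "okE B e < k0" using e by (auto simp: EL_def)
    have uV: "u \<in> V" using gf(4)[OF eE(1)] u by auto
    have "fvI B u \<le> feI B e" using fvI(3)[OF pd uV, of "feI B e"] feI(1,2)[OF pd eE(1)] u by auto
    then have "okV B u < okE B e" by (auto simp: okV_def okE_def)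
    then have "okV B u < k0" using eE(2) by simp
    then show "u \<in> VL" using uV by (simp add: VL_def)
  qed
  have BVc: "BV \<subseteq> B ! c"
  proof
    fix v assume "v \<in> BV"
    then obtain e where v: "v \<in> VL" and e: "e \<in> E" "e \<notin> EL" "v \<in> e" by (auto simp: BV_def)
    have vV: "v \<in> V" "okV B v < k0" using v by (auto simp: VL_def)
    have "k0 \<le> okE B e" using e by (auto simp: EL_def)
    then have c1: "c \<le> feI B e" by (auto simp: c_def okE_def less_eq_prod_def)
    have c2: "fvI B v \<le> c" using vV(2) by (auto simp: c_def okV_def less_prod_def)
    have "v \<in> B ! fvI B v" using fvI(2)[OF pd vV(1)] .
    moreover have "v \<in> B ! feI B e" using feI(2)[OF pd e(1)] e(3) by auto
    moreover have "feI B e < length B" using feI(1)[OF pd e(1)] .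
    ultimately show "v \<in> B ! c" using pd c1 c2 unfolding path_decomp_def by blast
  qed
  have cBV: "card BV \<le> pd_width B + 1"
  proof -
    have fb: "finite (B ! c)" using pd cB gf(1) unfolding path_decomp_def by (metis finite_subset nth_mem)
    have "card BV \<le> card (B ! c)" by (rule card_mono[OF fb BVc])
    also have "\<dots> \<le> Max (card ` set B)" using cB by (intro Max_ge) auto
    also have "\<dots> \<le> pd_width B + 1" by (simp add: pd_width_def)
    finally show ?thesis .
  qed
  define G where "G = (\<lambda>\<delta> \<sigma>. ?F (ovr PL \<delta> \<sigma>))"
  have cb: "finite (range G) \<and> card (range G) \<le> 1 + 2 ^ (card (fvo \<phi>) + card (feo \<phi>)) * Tb (card BV) (msize \<phi>)"
    unfolding G_def
    by (rule cut_bound[OF gf(1) gf(3) _ _ A1 BV_def PL_def]) (auto simp: VL_def EL_def)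
  have m1: "card (fvo \<phi>) + card (feo \<phi>) \<le> msize \<phi>" using fv_card[of \<phi>] by linarith
  have "1 + 2 ^ (card (fvo \<phi>) + card (feo \<phi>)) * Tb (card BV) (msize \<phi>) \<le> 1 + 2 ^ msize \<phi> * Tb (pd_width B + 1) (msize \<phi>)"
    using m1 cBV by (intro add_mono mult_le_mono power_increasing Tb_mono_b) auto
  then have cG: "finite (range G) \<and> card (range G) \<le> 1 + 2 ^ msize \<phi> * Tb (pd_width B + 1) (msize \<phi>)"
    using cb by linarith
  define H :: "((dvar \<Rightarrow> bool) \<Rightarrow> bool) \<times> dvar set \<Rightarrow> (dvar \<Rightarrow> bool) \<Rightarrow> bool"
    where "H = (\<lambda>(g, S) \<sigma>. g (ovr Q (\<lambda>d. d \<in> S) \<sigma>))"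
  have sub: "Res ?F ds j \<subseteq> H ` (range G \<times> Pow Q)"
  proof
    fix h assume "h \<in> Res ?F ds j"
    then obtain \<delta> where h: "h = (\<lambda>\<sigma>. ?F (ovr (set (take j ds)) \<delta> \<sigma>))" by (auto simp: Res_def)
    have "h = H (G \<delta>, {d\<in>Q. \<delta> d})" unfolding h split H_def G_def ovr_split by simp
    then show "h \<in> H ` (range G \<times> Pow Q)" by auto
  qed
  have fX: "finite (range G \<times> Pow Q)" using cG Qfc by auto
  have "card (range G \<times> Pow Q) = card (range G) * 2 ^ card Q" using cG Qfc by (simp add: card_cartesian_product card_Pow)
  also have "\<dots> \<le> (1 + 2 ^ msize \<phi> * Tb (pd_width B + 1) (msize \<phi>)) * 2 ^ msize \<phi>"
    using cG Qfc by (intro mult_le_mono power_increasing) auto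
  finally have "card (range G \<times> Pow Q) \<le> (1 + 2 ^ msize \<phi> * Tb (pd_width B + 1) (msize \<phi>)) * 2 ^ msize \<phi>" .
  then show ?thesis using sub fX by (meson card_image_le card_mono finite_imageI finite_subset le_trans)
qed

lemma dvars_card:
  assumes "finite V" "finite E"
  shows "finite (dvars \<phi> V E) \<and> card (dvars \<phi> V E) \<le> msize \<phi> * (card V + card E)"
proof -
  have fc: "finite (fvo \<phi>)" "finite (feo \<phi>)" "finite (fvs \<phi>)" "finite (fes \<phi>)"
    and sc: "card (fvo \<phi>) + card (feo \<phi>) + card (fvs \<phi>) + card (fes \<phi>) \<le> msize \<phi>"
    using fv_card[of \<phi>] by auto
  let ?A = "(\<lambda>(x, v). DVO x v) ` (fvo \<phi> \<times> V)"
  let ?B = "(\<lambda>(x, v). DEO x v) ` (feo \<phi> \<times> E)"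
  let ?C = "(\<lambda>(x, v). DVS x v) ` (fvs \<phi> \<times> V)"
  let ?E = "(\<lambda>(x, v). DES x v) ` (fes \<phi> \<times> E)"
  have eq: "dvars \<phi> V E = ?A \<union> ?B \<union> ?C \<union> ?E" by (auto simp: dvars_def)
  have f: "finite ?A" "finite ?B" "finite ?C" "finite ?E" using fc assms by auto
  have cA: "card ?A \<le> card (fvo \<phi>) * card V" using card_image_le[of "fvo \<phi> \<times> V"] fc assms by (simp add: card_cartesian_product)
  have cB: "card ?B \<le> card (feo \<phi>) * card E" using card_image_le[of "feo \<phi> \<times> E"] fc assms by (simp add: card_cartesian_product)
  have cC: "card ?C \<le> card (fvs \<phi>) * card V" using card_image_le[of "fvs \<phi> \<times> V"] fc assms by (simp add: card_cartesian_product)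
  have cE: "card ?E \<le> card (fes \<phi>) * card E" using card_image_le[of "fes \<phi> \<times> E"] fc assms by (simp add: card_cartesian_product)
  have "card (dvars \<phi> V E) \<le> card ?A + card ?B + card ?C + card ?E"
    unfolding eq by (meson card_Un_le add_mono le_trans order_refl)
  also have "\<dots> \<le> card (fvo \<phi>) * card V + card (feo \<phi>) * card E + card (fvs \<phi>) * card V + card (fes \<phi>) * card E"
    using cA cB cC cE by linarith
  also have "\<dots> \<le> msize \<phi> * card V + msize \<phi> * card E"
  proof -
    have "card (fvo \<phi>) * card V + card (fvs \<phi>) * card V \<le> msize \<phi> * card V"
    proof -
      have "card (fvo \<phi>) + card (fvs \<phi>) \<le> msize \<phi>" using sc by linarith
      then show ?thesis by (metis add_mult_distrib mult_le_mono1)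
    qed
    moreover have "card (feo \<phi>) * card E + card (fes \<phi>) * card E \<le> msize \<phi> * card E"
    proof -
      have "card (feo \<phi>) + card (fes \<phi>) \<le> msize \<phi>" using sc by linarith
      then show ?thesis by (metis add_mult_distrib mult_le_mono1)
    qed
    ultimately show ?thesis by linarith
  qed
  finally show ?thesis using eq f by (simp add: add_mult_distrib2)
qed

lemma pd_exists: "graph V E \<Longrightarrow> \<exists>B. path_decomp V E B \<and> pd_width B = pathwidth V E"
proof -
  assume g: "graph V E"
  have "path_decomp V E [V]" using graph_fin[OF g] unfolding path_decomp_def by (simp add: nth_Cons')
  then have ex: "\<exists>B. path_decomp V E B \<and> pd_width B = pd_width [V]" by blast
  have "\<exists>B. path_decomp V E B \<and> pd_width B = (LEAST w. \<exists>B. path_decomp V E B \<and> pd_width B = w)"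
    by (rule LeastI[of "\<lambda>w. \<exists>B. path_decomp V E B \<and> pd_width B = w", OF ex])
  then show ?thesis unfolding pathwidth_def .
qed

theorem mainTheorem2:
  shows "\<exists>f. computable f \<and>
    (\<forall>V E \<phi>. graph V E \<and> V \<noteq> {} \<longrightarrow>
       (\<exists>t. obdd_computes (dvars \<phi> V E) (Ffun \<phi> V E) t \<and>
            card (bnodes t) \<le> f (pathwidth V E + msize \<phi>) * (card V + card E)))"
proof (rule exI[of _ ff], intro conjI allI impI)
  show "computable ff" by (rule computable_ff)
  fix V E \<phi> assume a: "graph V E \<and> V \<noteq> {}"
  then have g: "graph V E" and Vne: "V \<noteq> {}" by auto
  have gf: "finite V" "finite E" using graph_fin[OF g] by auto
  obtain B where pd: "path_decomp V E B" and pw: "pd_width B = pathwidth V E" using pd_exists[OF g] by blast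
  let ?D = "dvars \<phi> V E"
  let ?F = "Ffun \<phi> V E"
  let ?m = "msize \<phi>"
  let ?n = "card V + card E"
  let ?k = "pathwidth V E + msize \<phi>"
  have Dc: "finite ?D \<and> card ?D \<le> ?m * ?n" by (rule dvars_card[OF gf])
  obtain xs where xs: "set xs = ?D" "distinct xs" using finite_distinct_list Dc by blast
  define ds where "ds = sort_key (dkey B) xs"
  have dsd: "distinct ds" "set ds = ?D" "sorted (map (dkey B) ds)" using xs by (auto simp: ds_def)
  have lds: "length ds = card ?D" using dsd by (metis distinct_card)
  define t where "t = build ds ?F"
  have loc: "\<forall>\<sigma> \<sigma>'. (\<forall>d\<in>set ds. \<sigma> d = \<sigma>' d) \<longrightarrow> ?F \<sigma> = ?F \<sigma>'"
  proof (intro allI impI)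
    fix \<sigma> \<sigma>' :: "dvar \<Rightarrow> bool" assume "\<forall>d\<in>set ds. \<sigma> d = \<sigma>' d"
    then show "?F \<sigma> = ?F \<sigma>'" using dsd(2) by (intro Ffun_local) simp
  qed
  have comp: "obdd_computes ?D ?F t"
    unfolding obdd_computes_def t_def
  proof (intro conjI exI allI)
    show "strict_linear_order_on ?D (lrel ds)" using lrel_order[OF dsd(1)] dsd(2) by simp
    show "bordered (lrel ds) (build ds ?F)" by (rule build_bordered)
    show "bvars (build ds ?F) \<subseteq> ?D" using build_vars[of ds ?F] dsd(2) by simp
    show "beval (build ds ?F) \<delta> = ?F \<delta>" for \<delta> by (rule build_eval[OF loc])
  qed
  define R where "R = (1 + 2 ^ ?m * Tb (pd_width B + 1) ?m) * 2 ^ ?m"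
  have R2: "2 \<le> R"
  proof -
    have "3 \<le> Tb (pd_width B + 1) ?m" by (rule Tb_ge)
    then have "1 \<le> 2 ^ ?m * Tb (pd_width B + 1) ?m" by (simp add: Suc_le_eq)
    then have "2 \<le> 1 + 2 ^ ?m * Tb (pd_width B + 1) ?m" by simp
    moreover have "1 \<le> (2::nat) ^ ?m" by simp
    ultimately have "2 * 1 \<le> (1 + 2 ^ ?m * Tb (pd_width B + 1) ?m) * 2 ^ ?m" by (rule mult_le_mono)
    then show ?thesis unfolding R_def by simp
  qed
  have lev: "finite (Res ?F ds j) \<and> card (Res ?F ds j) \<le> R" if "j \<le> length ds" for j
  proof (cases "j < length ds")
    case True
    then show ?thesis using level_bound[OF g pd dsd True] unfolding R_def by simp
  next
    case False
    then have jl: "j = length ds" using that by simp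
    have "Res ?F ds j \<subseteq> (\<lambda>b \<sigma>. b) ` UNIV"
    proof
      fix h assume "h \<in> Res ?F ds j"
      then obtain \<delta> where h: "h = (\<lambda>\<sigma>. ?F (ovr (set ds) \<delta> \<sigma>))" using jl by (auto simp: Res_def)
      have "?F (ovr (set ds) \<delta> \<sigma>) = ?F \<delta>" for \<sigma> using loc by (auto simp: ovr_def)
      then have "h = (\<lambda>\<sigma>. ?F \<delta>)" using h by auto
      then show "h \<in> (\<lambda>b \<sigma>. b) ` UNIV" by auto
    qed
    moreover have "finite ((\<lambda>b (\<sigma>::dvar \<Rightarrow> bool). b) ` (UNIV :: bool set))" by simp
    moreover have "card ((\<lambda>b (\<sigma>::dvar \<Rightarrow> bool). b) ` (UNIV :: bool set)) \<le> 2"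
      using card_image_le[of "UNIV :: bool set" "\<lambda>b (\<sigma>::dvar \<Rightarrow> bool). b"] by simp
    ultimately show ?thesis using R2 by (meson card_mono finite_subset le_trans)
  qed
  have F0: "?F \<in> Res ?F ds 0" by (auto simp: Res_def ovr_def intro!: image_eqI[of _ _ undefined])
  have cb: "card (bnodes t) \<le> (length ds + 1) * R" unfolding t_def by (rule build_card[OF dsd(1) lev F0])
  have n1: "1 \<le> ?n" using Vne gf by (simp add: Suc_leI card_gt_0_iff)
  have "(length ds + 1) * R \<le> (?m * ?n + ?n) * R" using lds Dc n1 by (intro mult_le_mono1) linarith
  also have "\<dots> = ((?m + 1) * R) * ?n" by (simp add: algebra_simps)
  also have "\<dots> \<le> ff ?k * ?n"
  proof (intro mult_le_mono1)
    have t1: "Tb (pd_width B + 1) ?m \<le> Tb (?k + 1) ?k"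
      using pw by (intro le_trans[OF Tb_mono_b Tb_mono_s']) auto
    have t2: "(2::nat) ^ ?m \<le> 2 ^ ?k" by (intro power_increasing) auto
    have t3: "(2::nat) ^ ?m \<le> 4 ^ ?k"
    proof -
      have "(2::nat) ^ ?k \<le> 4 ^ ?k" by (intro power_mono) auto
      then show ?thesis using t2 by linarith
    qed
    have "R \<le> (1 + 2 ^ ?k * Tb (?k + 1) ?k) * 4 ^ ?k"
      unfolding R_def using t1 t2 t3 by (intro mult_le_mono add_mono) auto
    then have "(?m + 1) * R \<le> (?k + 1) * ((1 + 2 ^ ?k * Tb (?k + 1) ?k) * 4 ^ ?k)"
      by (intro mult_le_mono) auto
    then show "(?m + 1) * R \<le> ff ?k" by (simp add: ff_def mult.commute mult.left_commute)
  qed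
  finally show "\<exists>t. obdd_computes ?D ?F t \<and> card (bnodes t) \<le> ff ?k * ?n"
    using comp cb by (meson le_trans)
qed


end
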